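(* Consider the setting described in the context, and assume A1–A5. A sequence of alternatives $f_n$ with $cn^{-r}<\|f_n\|<Cn^{-r}$ (constants $0<c<C$) is purely $n^{-r}$-consistent if and only if for every $n^{-r}$-inconsistent subsequence of alternatives $f_{1n_i}$ (with $n_i\to\infty$) one has $$\|f_{n_i}+f_{1n_i}\|^2=\|f_{n_i}\|^2+\|f_{1n_i}\|^2+o(n_i^{-r})\quad\text{as }i\to\infty .$$
   Context: Fix $\sigma>0$, $0<r<1/2$ and an orthonormal basis $(\phi_j)_{j\ge1}$ of $\mathbb{L}_2(0,1)$. For each $n$ one observes $dY_n(t)=f(t)\,dt+\sigma n^{-1/2}dw(t)$, equivalently $y_j=\theta_j+\sigma n^{-1/2}\xi_j$, $\theta_j=\int_0^1f\phi_j$, $\xi_j$ i.i.d. $N(0,1)$; $H_0:f=0$. Weights $\kappa_{nj}^2\ge0$, $\rho_n=\sum_j\kappa_{nj}^2$, $T_n(Y_n)=\sum_j\kappa_{nj}^2y_j^2-\sigma^2n^{-1}\rho_n$, $k_n=\sup\{k:\sum_{j<k}\kappa_{nj}^2\le\rho_n/2\}$, $\kappa_n^2=\kappa_{nk_n}^2$. Assumptions: (A1) $j\mapsto\kappa_{nj}^2$ decreasing; (A2) $C_1<\sigma^{-4}n^2\sum_j\kappa_{nj}^4<C_2$; (A3) $c_1n^{-2r}\le\rho_n\le c_2n^{-2r}$; (A4) $\exists C_1>0,\lambda>1$: $\kappa^2_{n,[(1+\delta)k_n]}<C_1(1+\delta)^{-\lambda}\kappa_n^2$ for all $\delta>0,n$;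 (A5) $\kappa_{n1}^2\asymp\kappa_n^2$ and for each $c>1$ there is $C>0$ with $\kappa^2_{n,[ck_n]}\ge C\kappa_n^2$. A test generated by $T_n$ rejects $H_0$ iff $T_n$ exceeds a threshold. A (sub)sequence $f_{n_i}$ is consistent if for every $\alpha\in(0,1)$ and every sequence of tests $K_{n_i}$ generated by $T_{n_i}$ with $\alpha(K_{n_i})=\alpha(1+o(1))$, $\limsup_i\beta(K_{n_i},f_{n_i})<1-\alpha$; inconsistent if for every sequence of tests $K_{n_i}$ generated by $T_{n_i}$, $\liminf_i(\alpha(K_{n_i})+\beta(K_{n_i},f_{n_i}))\ge1$. It is $n^{-r}$-consistent (resp. $n^{-r}$-inconsistent) if it is consistent (resp. inconsistent) and $cn_i^{-r}<\|f_{n_i}\|<Cn_i^{-r}$ for some $0<c<C$. An $n^{-r}$-consistent $f_n$ is purely $n^{-r}$-consistent if there is no subsequence with $f_{n_i}=f_{1n_i}+f_{2n_i}$, $f_{2n_i}\perp f_{1n_i}$, $\|f_{2n_i}\|>c_1n_i^{-r}$ for some $c_1>0$, and $f_{2n_i}$ inconsistent. *)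

theory Defs
  imports "HOL-Probability.Probability"
begin

text \<open>A signal f is represented by its coefficient sequence
  theta (theta j = <f, phi_(j+1)>, j = 0,1,2,... ; 0-based), which is an isometry
  L2(0,1) -> l2. Weights: w n j = kappa^2_(n,j+1) (0-based), i.e. the paper's
  1-based weight kappa^2_(n,m) is w n (m - 1).\<close>

definition l2 :: "(nat \<Rightarrow> real) \<Rightarrow> bool" where
  "l2 \<theta> \<longleftrightarrow> summable (\<lambda>j. (\<theta> j)\<^sup>2)"

definition nrm :: "(nat \<Rightarrow> real) \<Rightarrow> real" where
  "nrm \<theta> = sqrt (\<Sum>j. (\<theta> j)\<^sup>2)"

definition inr :: "(nat \<Rightarrow> real) \<Rightarrow> (nat \<Rightarrow> real) \<Rightarrow> real" where
  "inr \<theta> \<eta> = (\<Sum>j. \<theta> j * \<eta> j)"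

definition gauss :: "(nat \<Rightarrow> real) measure" where
  "gauss = PiM UNIV (\<lambda>_. density lborel std_normal_density)"

definition rho :: "(nat \<Rightarrow> nat \<Rightarrow> real) \<Rightarrow> nat \<Rightarrow> real" where
  "rho w n = (\<Sum>j. w n j)"

definition Tstat :: "(nat \<Rightarrow> nat \<Rightarrow> real) \<Rightarrow> real \<Rightarrow> nat \<Rightarrow> (nat \<Rightarrow> real) \<Rightarrow> (nat \<Rightarrow> real) \<Rightarrow> real" where
  "Tstat w \<sigma> n \<theta> \<xi> =
     (\<Sum>j. w n j * (\<theta> j + \<sigma> / sqrt (real n) * \<xi> j)\<^sup>2) - \<sigma>\<^sup>2 / real n * rho w n"

text \<open>k_n (1-based index, as in the paper) and kappa_n^2 = kappa^2_(n,k_n).\<close>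
definition kn :: "(nat \<Rightarrow> nat \<Rightarrow> real) \<Rightarrow> nat \<Rightarrow> nat" where
  "kn w n = Sup {k::nat. 1 \<le> k \<and> (\<Sum>m\<in>{1..<k}. w n (m - 1)) \<le> rho w n / 2}"

definition kap :: "(nat \<Rightarrow> nat \<Rightarrow> real) \<Rightarrow> nat \<Rightarrow> real" where
  "kap w n = w n (kn w n - 1)"

definition alpha_err :: "(nat \<Rightarrow> nat \<Rightarrow> real) \<Rightarrow> real \<Rightarrow> nat \<Rightarrow> real \<Rightarrow> real" where
  "alpha_err w \<sigma> n t = measure gauss {\<xi> \<in> space gauss. Tstat w \<sigma> n (\<lambda>_. 0) \<xi> > t}"

definition beta_err :: "(nat \<Rightarrow> nat \<Rightarrow> real) \<Rightarrow> real \<Rightarrow> nat \<Rightarrow> (nat \<Rightarrow> real) \<Rightarrow> real \<Rightarrow> real" where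
  "beta_err w \<sigma> n \<theta> t = measure gauss {\<xi> \<in> space gauss. Tstat w \<sigma> n \<theta> \<xi> \<le> t}"

text \<open>A (sub)sequence of alternatives: g i is the alternative at sample size ns i.\<close>
definition consistent :: "(nat \<Rightarrow> nat \<Rightarrow> real) \<Rightarrow> real \<Rightarrow> (nat \<Rightarrow> nat) \<Rightarrow> (nat \<Rightarrow> nat \<Rightarrow> real) \<Rightarrow> bool" where
  "consistent w \<sigma> ns g \<longleftrightarrow>
     (\<forall>a::real. 0 < a \<and> a < 1 \<longrightarrow>
       (\<forall>t::nat \<Rightarrow> real. (\<lambda>i. alpha_err w \<sigma> (ns i) (t i) / a) \<longlonglongrightarrow> 1 \<longrightarrow>
          limsup (\<lambda>i. ereal (beta_err w \<sigma> (ns i) (g i) (t i))) < ereal (1 - a)))"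

definition inconsistent :: "(nat \<Rightarrow> nat \<Rightarrow> real) \<Rightarrow> real \<Rightarrow> (nat \<Rightarrow> nat) \<Rightarrow> (nat \<Rightarrow> nat \<Rightarrow> real) \<Rightarrow> bool" where
  "inconsistent w \<sigma> ns g \<longleftrightarrow>
     (\<forall>t::nat \<Rightarrow> real.
        liminf (\<lambda>i. ereal (alpha_err w \<sigma> (ns i) (t i) + beta_err w \<sigma> (ns i) (g i) (t i))) \<ge> 1)"

definition rate_bounded :: "real \<Rightarrow> (nat \<Rightarrow> nat) \<Rightarrow> (nat \<Rightarrow> nat \<Rightarrow> real) \<Rightarrow> bool" where
  "rate_bounded r ns g \<longleftrightarrow>
     (\<exists>c C. 0 < c \<and> c < C \<and>
        (\<forall>i. 1 \<le> ns i \<longrightarrow> c * real (ns i) powr (-r) < nrm (g i) \<and> nrm (g i) < C * real (ns i) powr (-r)))"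

definition r_consistent where
  "r_consistent w \<sigma> r ns g \<longleftrightarrow> consistent w \<sigma> ns g \<and> rate_bounded r ns g"

definition r_inconsistent where
  "r_inconsistent w \<sigma> r ns g \<longleftrightarrow> inconsistent w \<sigma> ns g \<and> rate_bounded r ns g"

definition subseq_idx :: "(nat \<Rightarrow> nat) \<Rightarrow> bool" where
  "subseq_idx ns \<longleftrightarrow> strict_mono ns \<and> 1 \<le> ns 0"

text \<open>Purely n^(-r)-consistent, for a full sequence f (f n = alternative at sample size n;
  f 0 is irrelevant).\<close>
definition purely_r_consistent where
  "purely_r_consistent w \<sigma> r f \<longleftrightarrow>
     r_consistent w \<sigma> r id f \<and>
     \<not> (\<exists>ns f1 f2 c1. subseq_idx ns \<and> 0 < c1 \<and>
          (\<forall>i. l2 (f1 i) \<and> l2 (f2 i) \<and> f (ns i) = (\<lambda>j. f1 i j + f2 i j) \<and>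
               inr (f2 i) (f1 i) = 0 \<and> c1 * real (ns i) powr (-r) < nrm (f2 i)) \<and>
          inconsistent w \<sigma> ns f2)"

end

theory Submission
  imports Defs "HOL-Probability.Probability"
begin

lemma gauss_eq: "gauss = PiM UNIV (\<lambda>_. std_normal_distribution)" unfolding gauss_def ..
lemma prob_gauss: "prob_space gauss"
  unfolding gauss_def by (rule prob_space_PiM) (simp add: prob_space_normal_density)
lemma space_gauss: "space gauss = UNIV"
  unfolding gauss_def by (simp add: space_PiM)
lemma comp_gauss: "distr gauss borel (\<lambda>x. x i) = std_normal_distribution"
proof -
  have "distr gauss borel (\<lambda>x. x i) = distr gauss std_normal_distribution (\<lambda>x. x i)"
    by (rule distr_cong) auto
  also have "\<dots> = std_normal_distribution"
  unfolding gauss_def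
  using distr_PiM_component[of UNIV "\<lambda>_. std_normal_distribution" i]
  by (simp add: prob_space_normal_density)
  finally show ?thesis .
qed
lemma meas_comp[measurable]: "(\<lambda>x. x i) \<in> borel_measurable gauss"
  unfolding gauss_def
  by (metis measurable_component_singleton measurable_cong_sets sets_density sets_lborel UNIV_I)
lemma indep_gauss: "prob_space.indep_vars gauss (\<lambda>_. borel) (\<lambda>i x. x i) UNIV"
proof -
  interpret prob_space gauss by (rule prob_gauss)
  show ?thesis
  proof (subst indep_vars_iff_distr_eq_PiM)
    show "distr gauss (Pi\<^sub>M UNIV (\<lambda>i. borel)) (\<lambda>x. \<lambda>i\<in>UNIV. x i) = Pi\<^sub>M UNIV (\<lambda>i. distr gauss borel (\<lambda>x. x i))"
    proof -
      have "distr gauss (Pi\<^sub>M UNIV (\<lambda>i. borel)) (\<lambda>x. \<lambda>i\<in>UNIV. x i) = distr gauss gauss (\<lambda>x. x)"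
        by (rule distr_cong) (auto simp: gauss_def intro!: sets_PiM_cong)
      also have "\<dots> = gauss" by (rule distr_id)
      finally show ?thesis unfolding comp_gauss by (simp add: gauss_def)
    qed
  qed auto
qed

abbreviation "Phi \<equiv> cdf std_normal_distribution"

lemma std_normal_density_le1: "std_normal_density x \<le> 1"
proof -
  have "exp (- x\<^sup>2 / 2) \<le> 1" by simp
  moreover have "1 \<le> sqrt (2 * pi)" using pi_gt3 by simp
  ultimately have "exp (- x\<^sup>2 / 2) \<le> sqrt (2 * pi)" by linarith
  then show ?thesis unfolding std_normal_density_def
    by (simp add: divide_le_eq_1)
qed

lemma std_normal_density_mono:
  assumes "\<bar>x\<bar> \<le> K" shows "std_normal_density K \<le> std_normal_density x"
proof -
  have "x\<^sup>2 \<le> K\<^sup>2" using assms by (metis abs_le_square_iff abs_ge_self abs_le_D1 order_trans abs_abs)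
  then have "exp (- K\<^sup>2 / 2) \<le> exp (- x\<^sup>2 / 2)" by simp
  then show ?thesis unfolding std_normal_density_def by (simp add: divide_right_mono)
qed

lemma emeasure_std_normal_Ioc:
  "emeasure std_normal_distribution {a<..b} = (\<integral>\<^sup>+x. ennreal (std_normal_density x) * indicator {a<..b} x \<partial>lborel)"
  by (simp add: emeasure_density)

lemma Phi_diff_le:
  assumes "a \<le> b" shows "Phi b - Phi a \<le> b - a"
proof (cases "a = b")
  case True then show ?thesis by simp
next
  case False
  interpret real_distribution std_normal_distribution by (rule real_dist_normal_dist)
  have ab: "a < b" using assms False by simp
  have "emeasure std_normal_distribution {a<..b} \<le> (\<integral>\<^sup>+x. indicator {a<..b} x \<partial>lborel)"
    unfolding emeasure_std_normal_Ioc
    by (intro nn_integral_mono) (auto simp: indicator_def std_normal_density_le1)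
  also have "\<dots> = ennreal (b - a)" using ab by simp
  finally have "measure std_normal_distribution {a<..b} \<le> b - a"
    using ab by (simp add: emeasure_eq_measure)
  then show ?thesis using cdf_diff_eq[OF ab] by simp
qed

lemma Phi_diff_ge:
  assumes "a \<le> b" "\<bar>a\<bar> \<le> K" "\<bar>b\<bar> \<le> K"
  shows "(b - a) * std_normal_density K \<le> Phi b - Phi a"
proof (cases "a = b")
  case True then show ?thesis by simp
next
  case False
  interpret real_distribution std_normal_distribution by (rule real_dist_normal_dist)
  have ab: "a < b" using assms False by simp
  have "ennreal ((b - a) * std_normal_density K) = (\<integral>\<^sup>+x. ennreal (std_normal_density K) * indicator {a<..b} x \<partial>lborel)"
    using ab by (simp add: nn_integral_cmult ennreal_mult' mult.commute)
  also have "\<dots> \<le> emeasure std_normal_distribution {a<..b}"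
    unfolding emeasure_std_normal_Ioc
  proof (intro nn_integral_mono)
    fix x show "ennreal (std_normal_density K) * indicator {a<..b} x \<le> ennreal (std_normal_density x) * indicator {a<..b} x"
    proof (cases "x \<in> {a<..b}")
      case True
      then have "\<bar>x\<bar> \<le> K" using assms by auto
      then show ?thesis using True std_normal_density_mono[of x K] by (simp add: indicator_def)
    qed (auto simp: indicator_def)
  qed
  finally have "(b - a) * std_normal_density K \<le> measure std_normal_distribution {a<..b}"
    by (simp add: emeasure_eq_measure)
  then show ?thesis using cdf_diff_eq[OF ab] by simp
qed

interpretation Nd: real_distribution std_normal_distribution by (rule real_dist_normal_dist)

lemma Phi_mono: "x \<le> y \<Longrightarrow> Phi x \<le> Phi y"
  by (rule Nd.cdf_nondecreasing)
lemma Phi_nonneg: "0 \<le> Phi x" by (rule Nd.cdf_nonneg)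
lemma Phi_le1: "Phi x \<le> 1" by (rule Nd.cdf_bounded_prob)
lemma Phi_bot: "(Phi \<longlongrightarrow> 0) at_bot" by (rule Nd.cdf_lim_at_bot)
lemma Phi_top: "(Phi \<longlongrightarrow> 1) at_top" by (rule Nd.cdf_lim_at_top_prob)

lemma Phi_lip: "\<bar>Phi x - Phi y\<bar> \<le> \<bar>x - y\<bar>"
  using Phi_diff_le[of x y] Phi_diff_le[of y x] Phi_mono[of x y] Phi_mono[of y x]
  by (cases "x \<le> y") auto

lemma isCont_Phi: "isCont Phi x"
proof (rule continuous_at_eps_delta[THEN iffD2], intro allI impI)
  fix e :: real assume "0 < e"
  then show "\<exists>d>0. \<forall>y. dist y x < d \<longrightarrow> dist (Phi y) (Phi x) < e"
    by (intro exI[of _ e]) (auto simp: dist_real_def intro: le_less_trans[OF Phi_lip])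
qed

lemma gauss_integral_comp:
  fixes g :: "real \<Rightarrow> real"
  assumes [measurable]: "g \<in> borel_measurable borel"
  shows "integral\<^sup>L gauss (\<lambda>x. g (x i)) = integral\<^sup>L std_normal_distribution g"
  using integral_distr[OF meas_comp[of i] assms] comp_gauss[of i] by simp

lemma gauss_integrable_comp:
  fixes g :: "real \<Rightarrow> real"
  assumes [measurable]: "g \<in> borel_measurable borel"
  shows "integrable gauss (\<lambda>x. g (x i)) \<longleftrightarrow> integrable std_normal_distribution g"
  using integrable_distr_eq[OF meas_comp[of i] assms] comp_gauss[of i] by simp

lemma gauss_nn_integral_comp:
  fixes g :: "real \<Rightarrow> ennreal"
  assumes [measurable]: "g \<in> borel_measurable borel"
  shows "(\<integral>\<^sup>+x. g (x i) \<partial>gauss) = (\<integral>\<^sup>+x. g x \<partial>std_normal_distribution)"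
  using nn_integral_distr[OF meas_comp[of i], of g] comp_gauss[of i] by simp

lemma N_mom2: "integral\<^sup>L std_normal_distribution (\<lambda>x. x^2) = 1"
  using std_normal_distribution_even_moments(1)[of 1] by simp
lemma N_mom4: "integral\<^sup>L std_normal_distribution (\<lambda>x. x^4) = 3"
  using std_normal_distribution_even_moments(1)[of 2] by (simp add: fact_numeral)
lemma N_int: "integrable std_normal_distribution (\<lambda>x. x^k)"
  by (rule integrable_std_normal_distribution_moment)

lemma N_prob: "prob_space std_normal_distribution" by (rule prob_space_normal_density) simp

lemma N_mom1: "integral\<^sup>L std_normal_distribution (\<lambda>x. x) = 0"
  using integral_std_normal_distribution_moment_odd[of 1] by simp

lemma gauss_E1: "integral\<^sup>L gauss (\<lambda>x. x i) = 0"
  using gauss_integral_comp[of "\<lambda>x. x" i] N_mom1 by simp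
lemma gauss_E2: "integral\<^sup>L gauss (\<lambda>x. (x i)^2) = 1"
  using gauss_integral_comp[of "\<lambda>x. x^2" i] N_mom2 by simp
lemma gauss_int_pow: "integrable gauss (\<lambda>x. (x i)^k)"
  using gauss_integrable_comp[of "\<lambda>x. x^k" i] N_int by simp
lemma gauss_int1: "integrable gauss (\<lambda>x. x i)"
  using gauss_int_pow[of i 1] by simp

lemma gauss_nn2: "(\<integral>\<^sup>+x. ennreal ((x i)^2) \<partial>gauss) = 1"
proof -
  interpret prob_space gauss by (rule prob_gauss)
  have "(\<integral>\<^sup>+x. ennreal ((x i)^2) \<partial>gauss) = ennreal (integral\<^sup>L gauss (\<lambda>x. (x i)^2))"
    by (rule nn_integral_eq_integral) (auto intro: gauss_int_pow)
  then show ?thesis using gauss_E2 by simp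
qed

interpretation G: prob_space gauss by (rule prob_gauss)

lemma sets_gauss_borel: "A \<in> sets borel \<Longrightarrow> (\<lambda>x. x i) -` A \<in> sets gauss"
  using meas_comp[of i] by (auto simp: measurable_def space_gauss)

lemma AE_summable_sq:
  assumes v: "\<And>j. 0 \<le> v j" "summable v"
  shows "AE x in gauss. summable (\<lambda>j. v j * (x j)^2)"
proof -
  have "(\<integral>\<^sup>+x. (\<Sum>j. ennreal (v j * (x j)^2)) \<partial>gauss) = (\<Sum>j. \<integral>\<^sup>+x. ennreal (v j * (x j)^2) \<partial>gauss)"
    by (rule nn_integral_suminf) simp
  also have "\<dots> = (\<Sum>j. ennreal (v j))"
  proof (rule suminf_cong)
    fix j
    have "(\<integral>\<^sup>+x. ennreal (v j * (x j)^2) \<partial>gauss) = (\<integral>\<^sup>+x. ennreal (v j) * ennreal ((x j)^2) \<partial>gauss)"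
      using v by (simp add: ennreal_mult)
    also have "\<dots> = ennreal (v j) * (\<integral>\<^sup>+x. ennreal ((x j)^2) \<partial>gauss)"
      by (rule nn_integral_cmult) simp
    finally show "(\<integral>\<^sup>+x. ennreal (v j * (x j)^2) \<partial>gauss) = ennreal (v j)" using gauss_nn2[of j] by simp
  qed
  also have "\<dots> = ennreal (suminf v)" using v by (rule suminf_ennreal2)
  finally have "(\<integral>\<^sup>+x. (\<Sum>j. ennreal (v j * (x j)^2)) \<partial>gauss) \<noteq> \<infinity>" by simp
  then have "AE x in gauss. (\<Sum>j. ennreal (v j * (x j)^2)) \<noteq> \<infinity>"
    by (intro nn_integral_noteq_infinite) simp_all
  then show ?thesis
    by eventually_elim (rule summable_suminf_not_top, use v in auto)
qed

lemma gauss_E_prod: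
  shows "integrable gauss (\<lambda>x. x i * x j)" and "integral\<^sup>L gauss (\<lambda>x. x i * x j) = (if i = j then 1 else 0)"
proof -
  have ind: "G.indep_vars (\<lambda>_. borel) (\<lambda>i x. x i) {i, j}"
    by (rule G.indep_vars_subset[OF indep_gauss]) auto
  have "integrable gauss (\<lambda>x. x i * x j) \<and> integral\<^sup>L gauss (\<lambda>x. x i * x j) = (if i = j then 1 else 0)"
  proof (cases "i = j")
    case True
    then show ?thesis using gauss_int_pow[of j 2] gauss_E2[of j] by (simp add: power2_eq_square)
  next
    case False
    have "integrable gauss (\<lambda>x. \<Prod>k\<in>{i,j}. x k)"
      by (rule G.indep_vars_integrable[OF _ ind]) (auto intro: gauss_int1)
    moreover have "integral\<^sup>L gauss (\<lambda>x. \<Prod>k\<in>{i,j}. x k) = (\<Prod>k\<in>{i,j}. integral\<^sup>L gauss (\<lambda>x. x k))"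
      by (rule G.indep_vars_lebesgue_integral[OF _ ind]) (auto intro: gauss_int1)
    ultimately show ?thesis using False gauss_E1 by simp
  qed
  then show "integrable gauss (\<lambda>x. x i * x j)" and "integral\<^sup>L gauss (\<lambda>x. x i * x j) = (if i = j then 1 else 0)"
    by auto
qed

lemma gauss_E_lin_sq:
  "integral\<^sup>L gauss (\<lambda>x. (\<Sum>j<N. a j * x j)^2) = (\<Sum>j<N. (a j)^2)"
  "integrable gauss (\<lambda>x. (\<Sum>j<N. a j * x j)^2)"
proof -
  have eq: "(\<Sum>j<N. a j * x j)^2 = (\<Sum>i<N. \<Sum>j<N. a i * a j * (x i * x j))" for x
    by (simp add: power2_eq_square sum_product algebra_simps)
  have int: "integrable gauss (\<lambda>x. (\<Sum>i<N. \<Sum>j<N. a i * a j * (x i * x j)))"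
    by (intro Bochner_Integration.integrable_sum integrable_mult_right gauss_E_prod(1))
  show "integrable gauss (\<lambda>x. (\<Sum>j<N. a j * x j)^2)" unfolding eq by (rule int)
  have "integral\<^sup>L gauss (\<lambda>x. (\<Sum>j<N. a j * x j)^2) = integral\<^sup>L gauss (\<lambda>x. (\<Sum>i<N. \<Sum>j<N. a i * a j * (x i * x j)))"
    unfolding eq ..
  also have "\<dots> = (\<Sum>i<N. integral\<^sup>L gauss (\<lambda>x. \<Sum>j<N. a i * a j * (x i * x j)))"
    by (rule Bochner_Integration.integral_sum) (intro Bochner_Integration.integrable_sum integrable_mult_right gauss_E_prod(1))
  also have "\<dots> = (\<Sum>i<N. \<Sum>j<N. integral\<^sup>L gauss (\<lambda>x. a i * a j * (x i * x j)))"
    by (intro sum.cong refl Bochner_Integration.integral_sum) (intro integrable_mult_right gauss_E_prod(1))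
  also have "\<dots> = (\<Sum>i<N. \<Sum>j<N. a i * a j * integral\<^sup>L gauss (\<lambda>x. x i * x j))"
    by simp
  also have "\<dots> = (\<Sum>i<N. (a i)^2)"
    by (simp add: gauss_E_prod(2) power2_eq_square if_distrib sum.delta cong: if_cong)
  finally show "integral\<^sup>L gauss (\<lambda>x. (\<Sum>j<N. a j * x j)^2) = (\<Sum>j<N. (a j)^2)" .
qed

lemma gauss_nn_lin_sq:
  "(\<integral>\<^sup>+x. ennreal ((\<Sum>j<N. a j * x j)^2) \<partial>gauss) = ennreal (\<Sum>j<N. (a j)^2)"
  by (subst nn_integral_eq_integral) (auto simp: gauss_E_lin_sq)

lemma chebyshev_lin:
  assumes AE: "AE x in gauss. summable (\<lambda>j. a j * x j)"
    and sa: "summable (\<lambda>j. (a j)^2)" and c: "0 < c"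
  shows "measure gauss {x \<in> space gauss. c \<le> \<bar>\<Sum>j. a j * x j\<bar>} \<le> (\<Sum>j. (a j)^2) / c^2"
proof -
  let ?L = "\<lambda>x. (\<Sum>j. a j * x j)"
  let ?S = "\<lambda>N x. (\<Sum>j<N. a j * x j)"
  let ?A = "{x \<in> space gauss. c \<le> \<bar>?L x\<bar>}"
  have Ameas: "?A \<in> sets gauss" by measurable
  have AE2: "AE x in gauss. liminf (\<lambda>N. ennreal ((?S N x)^2)) = ennreal ((?L x)^2)"
    using AE
  proof eventually_elim
    case (elim x)
    then have "(\<lambda>N. ?S N x) \<longlonglongrightarrow> ?L x" by (simp add: summable_LIMSEQ)
    then have "(\<lambda>N. ennreal ((?S N x)^2)) \<longlonglongrightarrow> ennreal ((?L x)^2)"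
      by (intro tendsto_ennrealI tendsto_intros)
    then show ?case by (rule lim_imp_Liminf[OF trivial_limit_sequentially])
  qed
  have "(\<integral>\<^sup>+x. ennreal ((?L x)^2) \<partial>gauss) = (\<integral>\<^sup>+x. liminf (\<lambda>N. ennreal ((?S N x)^2)) \<partial>gauss)"
    by (rule nn_integral_cong_AE) (use AE2 in auto)
  also have "\<dots> \<le> liminf (\<lambda>N. (\<integral>\<^sup>+x. ennreal ((?S N x)^2) \<partial>gauss))"
    by (rule nn_integral_liminf) simp
  also have "\<dots> = liminf (\<lambda>N. ennreal (\<Sum>j<N. (a j)^2))"
    by (simp add: gauss_nn_lin_sq)
  also have "\<dots> \<le> ennreal (\<Sum>j. (a j)^2)"
  proof -
    have "(\<lambda>N. ennreal (\<Sum>j<N. (a j)^2)) \<longlonglongrightarrow> ennreal (\<Sum>j. (a j)^2)"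
      using sa by (intro tendsto_ennrealI) (simp add: summable_LIMSEQ)
    then show ?thesis by (simp add: lim_imp_Liminf)
  qed
  finally have I: "(\<integral>\<^sup>+x. ennreal ((?L x)^2) \<partial>gauss) \<le> ennreal (\<Sum>j. (a j)^2)" .
  have "ennreal (c^2) * emeasure gauss ?A = (\<integral>\<^sup>+x. ennreal (c^2) * indicator ?A x \<partial>gauss)"
    using Ameas by (simp add: nn_integral_cmult_indicator)
  also have "\<dots> \<le> (\<integral>\<^sup>+x. ennreal ((?L x)^2) \<partial>gauss)"
  proof (intro nn_integral_mono)
    fix x
    show "ennreal (c^2) * indicator ?A x \<le> ennreal ((?L x)^2)"
    proof (cases "x \<in> ?A")
      case True
      then have "c^2 \<le> (?L x)^2" using c
        by (metis (mono_tags, lifting) abs_le_square_iff abs_of_pos mem_Collect_eq)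
      then show ?thesis using True by (simp add: ennreal_leI)
    qed simp
  qed
  also note I
  finally have "ennreal (c^2) * ennreal (measure gauss ?A) \<le> ennreal (\<Sum>j. (a j)^2)"
    by (simp add: G.emeasure_eq_measure)
  then have "c^2 * measure gauss ?A \<le> (\<Sum>j. (a j)^2)"
    by (simp add: ennreal_mult'[symmetric] suminf_nonneg[OF sa])
  then show ?thesis using c by (simp add: field_simps)
qed

definition K3 :: real where "K3 = integral\<^sup>L std_normal_distribution (\<lambda>x. \<bar>x^2 - 1\<bar>^3)"

lemma N_int_cube: "integrable std_normal_distribution (\<lambda>x. \<bar>x^2 - 1\<bar>^3)"
proof -
  have eq: "(\<lambda>x::real. (x^2 - 1)^3) = (\<lambda>x. x^6 - 3 * x^4 + 3 * x^2 - 1)"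
    by (rule ext) (simp add: power3_eq_cube power2_eq_square algebra_simps power_numeral_reduce)
  have "integrable std_normal_distribution (\<lambda>x::real. (x^2 - 1)^3)"
    unfolding eq
    by (intro Bochner_Integration.integrable_diff Bochner_Integration.integrable_add integrable_mult_right N_int
        Nd.integrable_const)
  then have "integrable std_normal_distribution (\<lambda>x::real. \<bar>(x^2 - 1)^3\<bar>)" by (rule integrable_abs)
  then show ?thesis by (simp add: power_abs)
qed

lemma gauss_moments_Y:
  fixes u :: real and j :: nat
  defines "X \<equiv> \<lambda>x::nat\<Rightarrow>real. u * ((x j)^2 - 1)"
  shows "integrable gauss X" "integrable gauss (\<lambda>x. (X x)^2)" "integral\<^sup>L gauss X = 0"
    "integral\<^sup>L gauss (\<lambda>x. (X x)^2) = 2 * u^2"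
    "integrable gauss (\<lambda>x. \<bar>X x\<bar>^3)" "integral\<^sup>L gauss (\<lambda>x. \<bar>X x\<bar>^3) = \<bar>u\<bar>^3 * K3"
proof -
  have eq2: "(X x)^2 = u^2 * (x j)^4 - 2 * u^2 * (x j)^2 + u^2" for x
    by (simp add: X_def power2_eq_square algebra_simps power_numeral_reduce)
  show i1: "integrable gauss X" unfolding X_def
    by (intro integrable_mult_right Bochner_Integration.integrable_diff gauss_int_pow G.integrable_const)
  show "integral\<^sup>L gauss X = 0" unfolding X_def
    by (subst integral_mult_right_zero, subst Bochner_Integration.integral_diff)
       (auto intro: gauss_int_pow simp: gauss_E2 G.prob_space)
  show "integrable gauss (\<lambda>x. (X x)^2)" unfolding eq2
    by (intro integrable_mult_right Bochner_Integration.integrable_diff Bochner_Integration.integrable_add gauss_int_pow G.integrable_const)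
  have E4: "integral\<^sup>L gauss (\<lambda>x. (x j)^4) = 3"
    using gauss_integral_comp[of "\<lambda>x. x^4" j] N_mom4 by simp
  show "integral\<^sup>L gauss (\<lambda>x. (X x)^2) = 2 * u^2" unfolding eq2
    by (subst Bochner_Integration.integral_add, (auto intro!: integrable_mult_right Bochner_Integration.integrable_diff gauss_int_pow)[2],
        subst Bochner_Integration.integral_diff, (auto intro!: integrable_mult_right gauss_int_pow)[2])
       (simp add: E4 gauss_E2 G.prob_space)
  have m: "(\<lambda>x::real. \<bar>x^2 - 1\<bar>^3) \<in> borel_measurable borel" by measurable
  have eq3: "\<bar>X x\<bar>^3 = \<bar>u\<bar>^3 * \<bar>(x j)^2 - 1\<bar>^3" for x
    by (simp add: X_def abs_mult power_mult_distrib)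
  show "integrable gauss (\<lambda>x. \<bar>X x\<bar>^3)" unfolding eq3
    by (intro integrable_mult_right) (simp add: gauss_integrable_comp[OF m] N_int_cube)
  show "integral\<^sup>L gauss (\<lambda>x. \<bar>X x\<bar>^3) = \<bar>u\<bar>^3 * K3" unfolding eq3
    by (simp add: gauss_integral_comp[OF m] K3_def)
qed

lemma char_factor_bound:
  fixes u t :: real
  shows "cmod (char (distr gauss borel (\<lambda>x. u * ((x j)^2 - 1))) t - (1 - t^2 * u^2)) \<le> K3 * \<bar>t\<bar>^3 * \<bar>u\<bar>^3 / 6"
proof -
  let ?X = "\<lambda>x::nat\<Rightarrow>real. u * ((x j)^2 - 1)"
  note m = gauss_moments_Y[of u j]
  have var: "G.variance ?X = 2 * u^2" unfolding m(3) using m(4) by simp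
  have "cmod (char (distr gauss borel ?X) t - (1 - t^2 * (2 * u^2) / 2)) \<le>
    (t^2 / 6) * G.expectation (\<lambda>x. min (6 * (?X x)^2) (\<bar>t\<bar> * \<bar>?X x\<bar>^3))"
    by (rule G.char_approx3'[OF _ m(1) m(2) m(3) var refl]) simp
  also have "\<dots> \<le> (t^2 / 6) * G.expectation (\<lambda>x. \<bar>t\<bar> * \<bar>?X x\<bar>^3)"
  proof (intro mult_left_mono integral_mono)
    show "integrable gauss (\<lambda>x. min (6 * (?X x)^2) (\<bar>t\<bar> * \<bar>?X x\<bar>^3))"
      by (rule Bochner_Integration.integrable_bound[where f="\<lambda>x. 6 * (?X x)^2"])
         (auto intro: integrable_mult_right m(2))
  qed (auto intro: integrable_mult_right m(5))
  also have "\<dots> = K3 * \<bar>t\<bar>^3 * \<bar>u\<bar>^3 / 6"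
    using m(6) by (simp add: power2_eq_square power3_eq_cube abs_mult)
  finally show ?thesis by (simp add: power2_eq_square mult.assoc)
qed

lemma exp_neg_upper: "0 \<le> (a::real) \<Longrightarrow> exp (- a) \<le> 1 - a + a^2 / 2"
proof -
  assume a: "0 \<le> a"
  have pos: "0 < 1 + a + a^2/2" using a by (simp add: add_pos_nonneg)
  have "0 \<le> a * (a * (a * a))" using a by simp
  then have "1 \<le> (1 - a + a^2/2) * (1 + a + a^2/2)"
    by (simp add: algebra_simps power2_eq_square power4_eq_xxxx)
  also have "\<dots> \<le> (1 - a + a^2/2) * exp a"
  proof (rule mult_left_mono)
    show "1 + a + a\<^sup>2 / 2 \<le> exp a" using exp_lower_Taylor_quadratic[OF a] .
    have "0 \<le> (1 - a/2)^2 + a^2/4" by simp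
    then show "0 \<le> 1 - a + a^2/2" by (simp add: power2_eq_square algebra_simps)
  qed
  finally have "1 / exp a \<le> 1 - a + a^2/2" by (simp add: divide_le_eq)
  then show ?thesis by (simp add: exp_minus field_simps)
qed

lemma exp_approx_bound: "0 \<le> (a::real) \<Longrightarrow> \<bar>(1 - a) - exp (- a)\<bar> \<le> a^2 / 2"
  using exp_neg_upper[of a] exp_ge_add_one_self[of "-a"] by auto

lemma indep_Y: "G.indep_vars (\<lambda>_. borel) (\<lambda>j x. u j * ((x j)^2 - 1)) I"
proof -
  have "G.indep_vars (\<lambda>_. borel) (\<lambda>j x. (\<lambda>y. u j * (y^2 - 1)) (x j)) I"
    by (rule G.indep_vars_compose2[OF G.indep_vars_subset[OF indep_gauss]]) auto
  then show ?thesis by simp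
qed

lemma char_partial_bound:
  fixes u :: "nat \<Rightarrow> real" and t umax :: real
  assumes u: "\<And>j. 0 \<le> u j" "\<And>j. u j \<le> umax" and small: "t^2 * umax^2 \<le> 1"
  shows "cmod (char (distr gauss borel (\<lambda>x. \<Sum>j<N. u j * ((x j)^2 - 1))) t - exp (- (t^2 * (\<Sum>j<N. (u j)^2))))
     \<le> K3 * \<bar>t\<bar>^3 * umax * (\<Sum>j<N. (u j)^2) / 6 + t^4 * umax^2 * (\<Sum>j<N. (u j)^2) / 2"
proof -
  let ?c = "\<lambda>j. char (distr gauss borel (\<lambda>x. u j * ((x j)^2 - 1))) t"
  let ?p = "\<lambda>j. complex_of_real (1 - t^2 * (u j)^2)"
  let ?e = "\<lambda>j. complex_of_real (exp (- (t^2 * (u j)^2)))"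
  have K3: "0 \<le> K3" unfolding K3_def by (rule integral_nonneg_AE) simp
  have a1: "t^2 * (u j)^2 \<le> 1" for j
  proof -
    have "(u j)^2 \<le> umax^2" using u[of j] by (intro power_mono) auto
    then have "t^2 * (u j)^2 \<le> t^2 * umax^2" by (intro mult_left_mono) auto
    then show ?thesis using small by simp
  qed
  have ch: "char (distr gauss borel (\<lambda>x. \<Sum>j<N. u j * ((x j)^2 - 1))) t = (\<Prod>j<N. ?c j)"
    by (rule G.char_distr_sum[OF indep_Y])
  have e: "complex_of_real (exp (- (t^2 * (\<Sum>j<N. (u j)^2)))) = (\<Prod>j<N. ?e j)"
  proof -
    have "exp (- (t^2 * (\<Sum>j<N. (u j)^2))) = (\<Prod>j<N. exp (- (t^2 * (u j)^2)))"
      by (simp add: exp_sum[symmetric] sum_distrib_left sum_negf)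
    then show ?thesis by simp
  qed
  have "cmod ((\<Prod>j<N. ?c j) - (\<Prod>j<N. ?p j)) \<le> (\<Sum>j<N. cmod (?c j - ?p j))"
  proof (rule norm_prod_diff)
    fix j
    show "cmod (?c j) \<le> 1"
      by (rule real_distribution.cmod_char_le_1) (rule G.real_distribution_distr, simp)
    show "cmod (?p j) \<le> 1"
    proof -
      have "0 \<le> t^2 * (u j)^2" by simp
      then have "\<bar>1 - t^2 * (u j)^2\<bar> \<le> 1" using a1[of j] by (simp add: abs_le_iff)
      then show ?thesis by (simp only: norm_of_real)
    qed
  qed
  also have "\<dots> \<le> (\<Sum>j<N. K3 * \<bar>t\<bar>^3 * \<bar>u j\<bar>^3 / 6)"
    by (intro sum_mono) (use char_factor_bound in \<open>simp add: power2_eq_square\<close>)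
  also have "\<dots> \<le> (\<Sum>j<N. K3 * \<bar>t\<bar>^3 * (umax * (u j)^2) / 6)"
  proof (intro sum_mono divide_right_mono mult_left_mono)
    fix j
    have "\<bar>u j\<bar>^3 = u j * (u j)^2" using u by (simp add: power3_eq_cube power2_eq_square)
    also have "\<dots> \<le> umax * (u j)^2" using u by (intro mult_right_mono) auto
    finally show "\<bar>u j\<bar>^3 \<le> umax * (u j)^2" .
  qed (use K3 in auto)
  finally have b1: "cmod ((\<Prod>j<N. ?c j) - (\<Prod>j<N. ?p j)) \<le> K3 * \<bar>t\<bar>^3 * umax * (\<Sum>j<N. (u j)^2) / 6"
    by (simp add: sum_distrib_left sum_divide_distrib mult.assoc)
  have "cmod ((\<Prod>j<N. ?p j) - (\<Prod>j<N. ?e j)) \<le> (\<Sum>j<N. cmod (?p j - ?e j))"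
  proof (rule norm_prod_diff)
    fix j
    show "cmod (?p j) \<le> 1"
    proof -
      have "0 \<le> t^2 * (u j)^2" by simp
      then have "\<bar>1 - t^2 * (u j)^2\<bar> \<le> 1" using a1[of j] by (simp add: abs_le_iff)
      then show ?thesis by (simp only: norm_of_real)
    qed
    show "cmod (?e j) \<le> 1" by simp
  qed
  also have "\<dots> \<le> (\<Sum>j<N. (t^2 * (u j)^2)^2 / 2)"
  proof (intro sum_mono)
    fix j
    have "cmod (?p j - ?e j) = \<bar>(1 - t^2 * (u j)^2) - exp (- (t^2 * (u j)^2))\<bar>"
      by (simp flip: of_real_diff)
    also have "\<dots> \<le> (t^2 * (u j)^2)^2 / 2" by (rule exp_approx_bound) simp
    finally show "cmod (?p j - ?e j) \<le> (t^2 * (u j)^2)^2 / 2" .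
  qed
  also have "\<dots> \<le> (\<Sum>j<N. t^4 * umax^2 * (u j)^2 / 2)"
  proof (intro sum_mono)
    fix j
    have "(u j)^2 \<le> umax^2" using u[of j] by (intro power_mono) auto
    then have "(u j)^2 * (u j)^2 \<le> umax^2 * (u j)^2" by (intro mult_right_mono) auto
    then have "t^4 * ((u j)^2 * (u j)^2) \<le> t^4 * (umax^2 * (u j)^2)" by (intro mult_left_mono) auto
    then show "(t^2 * (u j)^2)^2 / 2 \<le> t^4 * umax^2 * (u j)^2 / 2"
      by (simp add: power2_eq_square power4_eq_xxxx mult.assoc mult.left_commute)
  qed
  finally have b2: "cmod ((\<Prod>j<N. ?p j) - (\<Prod>j<N. ?e j)) \<le> t^4 * umax^2 * (\<Sum>j<N. (u j)^2) / 2"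
    by (simp add: sum_distrib_left sum_divide_distrib mult.assoc)
  have "cmod ((\<Prod>j<N. ?c j) - (\<Prod>j<N. ?e j)) \<le> cmod ((\<Prod>j<N. ?c j) - (\<Prod>j<N. ?p j)) + cmod ((\<Prod>j<N. ?p j) - (\<Prod>j<N. ?e j))"
    by (rule norm_diff_triangle_ineq[THEN order_trans[rotated]]) simp
  then show ?thesis using b1 b2 unfolding ch e by simp
qed

definition Useries :: "(nat \<Rightarrow> real) \<Rightarrow> (nat \<Rightarrow> real) \<Rightarrow> real" where
  "Useries u x = (\<Sum>j. u j * ((x j)^2 - 1))"

lemma Useries_meas[measurable]: "Useries u \<in> borel_measurable gauss"
  unfolding Useries_def by measurable

lemma char_distr_gauss: 
  assumes [measurable]: "f \<in> borel_measurable gauss"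
  shows "char (distr gauss borel f) t = (CLINT x|gauss. iexp (t * f x))"
  unfolding char_def by (simp add: integral_distr)

lemma AE_Useries_summable:
  assumes u: "\<And>j. 0 \<le> u j" "summable u"
  shows "AE x in gauss. summable (\<lambda>j. u j * ((x j)^2 - 1))"
  using AE_summable_sq[OF u]
proof eventually_elim
  case (elim x)
  have "summable (\<lambda>j. u j * (x j)^2 - u j)" by (rule summable_diff[OF elim u(2)])
  then show ?case by (simp add: algebra_simps)
qed

lemma char_full_bound:
  fixes u :: "nat \<Rightarrow> real" and t umax :: real
  assumes u: "\<And>j. 0 \<le> u j" "\<And>j. u j \<le> umax" "summable u" and small: "t^2 * umax^2 \<le> 1"
  shows "cmod (char (distr gauss borel (Useries u)) t - exp (- (t^2 * (\<Sum>j. (u j)^2))))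
     \<le> K3 * \<bar>t\<bar>^3 * umax * (\<Sum>j. (u j)^2) / 6 + t^4 * umax^2 * (\<Sum>j. (u j)^2) / 2"
proof -
  have um: "0 \<le> umax" using u(1)[of 0] u(2)[of 0] by simp
  have K3: "0 \<le> K3" unfolding K3_def by (rule integral_nonneg_AE) simp
  have su2: "summable (\<lambda>j. (u j)^2)"
  proof (rule summable_comparison_test[OF _ summable_mult[OF u(3), of umax]])
    show "\<exists>N. \<forall>n\<ge>N. norm ((u n)\<^sup>2) \<le> umax * u n"
      using u by (auto simp: power2_eq_square intro!: mult_right_mono)
  qed
  let ?S = "\<lambda>N. (\<Sum>j<N. (u j)^2)"
  let ?P = "\<lambda>N x. (\<Sum>j<N. u j * ((x j)^2 - 1))"
  let ?C = "K3 * \<bar>t\<bar>^3 * umax * (\<Sum>j. (u j)^2) / 6 + t^4 * umax^2 * (\<Sum>j. (u j)^2) / 2"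
  have chN: "(\<lambda>N. char (distr gauss borel (?P N)) t) \<longlonglongrightarrow> char (distr gauss borel (Useries u)) t"
    unfolding char_distr_gauss[OF Useries_meas]
  proof (subst char_distr_gauss, measurable)
    show "(\<lambda>N. CLINT x|gauss. iexp (t * ?P N x)) \<longlonglongrightarrow> (CLINT x|gauss. iexp (t * Useries u x))"
    proof (rule integral_dominated_convergence[where w="\<lambda>_. 1"])
      show "AE x in gauss. (\<lambda>N. iexp (t * ?P N x)) \<longlonglongrightarrow> iexp (t * Useries u x)"
        using AE_Useries_summable[OF u(1) u(3)]
      proof eventually_elim
        case (elim x)
        then have "(\<lambda>N. ?P N x) \<longlonglongrightarrow> Useries u x" unfolding Useries_def by (rule summable_LIMSEQ)
        then show ?case by (intro tendsto_intros)
      qed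
    qed auto
  qed
  have expN: "(\<lambda>N. complex_of_real (exp (- (t^2 * ?S N)))) \<longlonglongrightarrow> complex_of_real (exp (- (t^2 * (\<Sum>j. (u j)^2))))"
    by (intro tendsto_intros summable_LIMSEQ su2)
  have lim: "(\<lambda>N. cmod (char (distr gauss borel (?P N)) t - exp (- (t^2 * ?S N))))
      \<longlonglongrightarrow> cmod (char (distr gauss borel (Useries u)) t - exp (- (t^2 * (\<Sum>j. (u j)^2))))"
    by (intro tendsto_intros chN expN)
  show ?thesis
  proof (rule LIMSEQ_le_const2[OF lim], intro exI allI impI)
    fix N :: nat
    have SN: "?S N \<le> (\<Sum>j. (u j)^2)" by (rule sum_le_suminf[OF su2]) auto
    have "cmod (char (distr gauss borel (?P N)) t - exp (- (t^2 * ?S N)))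
      \<le> K3 * \<bar>t\<bar>^3 * umax * ?S N / 6 + t^4 * umax^2 * ?S N / 2"
      by (rule char_partial_bound[OF u(1) u(2) small])
    also have "\<dots> \<le> ?C"
      using SN K3 um by (intro add_mono divide_right_mono mult_left_mono) auto
    finally show "cmod (char (distr gauss borel (?P N)) t - exp (- (t^2 * ?S N))) \<le> ?C" .
  qed
qed

lemma cdf_distr_gauss:
  assumes [measurable]: "f \<in> borel_measurable gauss"
  shows "cdf (distr gauss borel f) x = measure gauss {y \<in> space gauss. f y \<le> x}"
  unfolding cdf_def by (simp add: measure_distr vimage_def Int_def conj_commute)

lemma clt_weights:
  fixes u :: "nat \<Rightarrow> nat \<Rightarrow> real" and umax :: "nat \<Rightarrow> real"
  assumes u: "\<And>n j. 0 \<le> u n j" "\<And>n j. u n j \<le> umax n" "\<And>n. summable (u n)"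
    and s: "\<And>n. (\<Sum>j. (u n j)^2) = 1/2" and um: "umax \<longlonglongrightarrow> 0"
  shows "(\<lambda>n. measure gauss {y \<in> space gauss. Useries (u n) y \<le> x}) \<longlonglongrightarrow> Phi x"
proof -
  have wc: "weak_conv_m (\<lambda>n. distr gauss borel (Useries (u n))) std_normal_distribution"
  proof (rule levy_continuity)
    show "real_distribution (distr gauss borel (Useries (u n)))" for n by simp
    show "real_distribution std_normal_distribution" by (rule real_dist_normal_dist)
    fix t
    let ?B = "\<lambda>n. K3 * \<bar>t\<bar>^3 * umax n * (1/2) / 6 + t^4 * (umax n)^2 * (1/2) / 2"
    have ev: "eventually (\<lambda>n. t^2 * (umax n)^2 \<le> 1) sequentially"
    proof -
      have "(\<lambda>n. t^2 * (umax n)^2) \<longlonglongrightarrow> t^2 * 0^2" by (intro tendsto_intros um)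
      then have "eventually (\<lambda>n. t^2 * (umax n)^2 < 1) sequentially"
        by (rule order_tendstoD) simp
      then show ?thesis by eventually_elim simp
    qed
    have "(\<lambda>n. char (distr gauss borel (Useries (u n))) t - char std_normal_distribution t) \<longlonglongrightarrow> 0"
    proof (rule Lim_null_comparison)
      show "eventually (\<lambda>n. cmod (char (distr gauss borel (Useries (u n))) t - char std_normal_distribution t) \<le> ?B n) sequentially"
        using ev
      proof eventually_elim
        case (elim n)
        have "cmod (char (distr gauss borel (Useries (u n))) t - exp (- (t^2 * (1/2)))) \<le> ?B n"
          using char_full_bound[OF u(1)[of n] u(2)[of n] u(3)[of n] elim] unfolding s[of n] .
        moreover have "exp (- (t^2 * (1/2))) = exp (- (t^2) / 2)" by simp
        ultimately show ?case by (simp add: char_std_normal_distribution)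
      qed
      have "?B \<longlonglongrightarrow> K3 * \<bar>t\<bar>^3 * 0 * (1/2) / 6 + t^4 * 0^2 * (1/2) / 2"
        by (intro tendsto_intros um) simp_all
      then show "?B \<longlonglongrightarrow> 0" by simp
    qed
    then show "(\<lambda>n. char (distr gauss borel (Useries (u n))) t) \<longlonglongrightarrow> char std_normal_distribution t"
      by (simp add: LIM_zero_iff)
  qed
  then have "(\<lambda>n. cdf (distr gauss borel (Useries (u n))) x) \<longlonglongrightarrow> Phi x"
    unfolding weak_conv_m_def weak_conv_def using isCont_Phi by blast
  then show ?thesis by (simp add: cdf_distr_gauss)
qed

lemma polya_unif:
  fixes F :: "nat \<Rightarrow> real \<Rightarrow> real"
  assumes mono: "\<And>n x y. x \<le> y \<Longrightarrow> F n x \<le> F n y"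
    and bnd: "\<And>n x. 0 \<le> F n x" "\<And>n x. F n x \<le> 1"
    and conv: "\<And>x. (\<lambda>n. F n x) \<longlonglongrightarrow> Phi x"
    and e: "0 < e"
  shows "eventually (\<lambda>n. \<forall>x. \<bar>F n x - Phi x\<bar> \<le> e) sequentially"
proof -
  define h where "h = e / 2"
  have h: "0 < h" using e by (simp add: h_def)
  obtain L1 where L1: "\<And>x. x \<le> L1 \<Longrightarrow> Phi x \<le> h"
  proof -
    have "eventually (\<lambda>x. Phi x < h) at_bot" using order_tendstoD(2)[OF Phi_bot h] .
    then obtain L where "\<And>x. x \<le> L \<Longrightarrow> Phi x < h" by (auto simp: eventually_at_bot_linorder)
    then show ?thesis using that by (meson less_imp_le)
  qed
  obtain L2 where L2: "\<And>x. L2 \<le> x \<Longrightarrow> 1 - h \<le> Phi x"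
  proof -
    have "eventually (\<lambda>x. 1 - h < Phi x) at_top" using order_tendstoD(1)[OF Phi_top] h by simp
    then obtain L where "\<And>x. L \<le> x \<Longrightarrow> 1 - h < Phi x" by (auto simp: eventually_at_top_linorder)
    then show ?thesis using that by (meson less_imp_le)
  qed
  define K :: nat where "K = nat \<lceil>(L2 - L1) / h\<rceil>"
  define g where "g k = L1 + real k * h" for k :: nat
  have gK: "L2 \<le> g K"
  proof -
    have "(L2 - L1) / h \<le> real K" unfolding K_def by linarith
    then have "L2 - L1 \<le> real K * h" using h by (simp add: divide_le_eq)
    then show ?thesis by (simp add: g_def)
  qed
  have ev: "eventually (\<lambda>n. \<forall>k\<in>{..K}. \<bar>F n (g k) - Phi (g k)\<bar> \<le> h) sequentially"
  proof (rule eventually_ball_finite, simp, intro ballI)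
    fix k
    have "(\<lambda>n. F n (g k) - Phi (g k)) \<longlonglongrightarrow> 0" using conv[of "g k"] by (simp add: LIM_zero)
    then have "(\<lambda>n. norm (F n (g k) - Phi (g k))) \<longlonglongrightarrow> 0" by (rule tendsto_norm_zero)
    then have "eventually (\<lambda>n. norm (F n (g k) - Phi (g k)) < h) sequentially"
      using h by (rule order_tendstoD(2))
    then show "eventually (\<lambda>n. \<bar>F n (g k) - Phi (g k)\<bar> \<le> h) sequentially" by eventually_elim simp
  qed
  show ?thesis using ev
  proof eventually_elim
    case (elim n)
    show ?case
    proof
      fix x
      consider "x < g 0" | "g K \<le> x" | "g 0 \<le> x" "x < g K" by linarith
      then show "\<bar>F n x - Phi x\<bar> \<le> e"
      proof cases
        case 1
        have "F n x \<le> F n (g 0)" using 1 by (intro mono) simp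
        also have "\<dots> \<le> Phi (g 0) + h" using elim by force
        also have "Phi (g 0) \<le> h" using L1 by (simp add: g_def)
        finally have "F n x \<le> 2 * h" by simp
        moreover have "Phi x \<le> h" using L1 1 by (simp add: g_def)
        ultimately show ?thesis using bnd[of n x] Phi_nonneg[of x] h by (simp add: h_def abs_le_iff)
      next
        case 2
        have "Phi (g K) - h \<le> F n (g K)" using elim by force
        also have "\<dots> \<le> F n x" using 2 by (intro mono)
        finally have "1 - 2 * h \<le> F n x" using L2[OF gK] by simp
        moreover have "1 - h \<le> Phi x" using L2 gK 2 by simp
        ultimately show ?thesis using bnd[of n x] Phi_le1[of x] h by (simp add: h_def abs_le_iff)
      next
        case 3
        define k where "k = nat \<lfloor>(x - L1) / h\<rfloor>"
        have x0: "0 \<le> (x - L1) / h" using 3 h by (simp add: g_def)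
        have k1: "g k \<le> x"
        proof -
          have "real k \<le> (x - L1) / h" unfolding k_def using x0 by linarith
          then have "real k * h \<le> x - L1" using h by (simp add: le_divide_eq)
          then show ?thesis by (simp add: g_def)
        qed
        have k2: "x < g (Suc k)"
        proof -
          have "(x - L1) / h < real (Suc k)" unfolding k_def using x0 by linarith
          then have "x - L1 < real (Suc k) * h" using h by (simp add: divide_less_eq)
          then show ?thesis by (simp add: g_def)
        qed
        have kK: "Suc k \<le> K"
        proof (rule ccontr)
          assume "\<not> Suc k \<le> K"
          then have "K \<le> k" by simp
          then have "g K \<le> g k" using h by (simp add: g_def mult_right_mono)
          then show False using k1 3 by simp
        qed
        have gs: "g (Suc k) = g k + h" by (simp add: g_def algebra_simps)
        have up: "F n x \<le> Phi x + 2 * h"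
        proof -
          have "F n x \<le> F n (g (Suc k))" using k2 by (intro mono) simp
          also have "\<dots> \<le> Phi (g (Suc k)) + h" using elim kK by force
          also have "Phi (g (Suc k)) \<le> Phi x + h"
            using Phi_diff_le[of x "g (Suc k)"] k1 k2 gs by simp
          finally show ?thesis by simp
        qed
        have lo: "Phi x - 2 * h \<le> F n x"
        proof -
          have "Phi x \<le> Phi (g k) + h" using Phi_diff_le[of "g k" x] k1 k2 gs by simp
          also have "Phi (g k) \<le> F n (g k) + h"
          proof -
            have "k \<in> {..K}" using kK by simp
            then have "\<bar>F n (g k) - Phi (g k)\<bar> \<le> h" using elim by blast
            then show ?thesis by (simp add: abs_le_iff)
          qed
          also have "F n (g k) \<le> F n x" using k1 by (intro mono)
          finally show ?thesis by simp
        qed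
        show ?thesis using up lo by (simp add: h_def abs_le_iff)
      qed
    qed
  qed
qed

definition N2 :: "(nat \<Rightarrow> nat \<Rightarrow> real) \<Rightarrow> nat \<Rightarrow> real" where "N2 w n = (\<Sum>j. (w n j)^2)"
definition cc :: "(nat \<Rightarrow> nat \<Rightarrow> real) \<Rightarrow> nat \<Rightarrow> real" where "cc w n = sqrt (2 * N2 w n)"
definition uw :: "(nat \<Rightarrow> nat \<Rightarrow> real) \<Rightarrow> nat \<Rightarrow> nat \<Rightarrow> real" where "uw w n j = w n j / cc w n"
definition tau :: "(nat \<Rightarrow> nat \<Rightarrow> real) \<Rightarrow> real \<Rightarrow> nat \<Rightarrow> real" where "tau w \<sigma> n = \<sigma>^2 / real n * cc w n"
definition Aw :: "(nat \<Rightarrow> nat \<Rightarrow> real) \<Rightarrow> nat \<Rightarrow> (nat \<Rightarrow> real) \<Rightarrow> real" where "Aw w n \<theta> = (\<Sum>j. w n j * (\<theta> j)^2)"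
definition Dn :: "(nat \<Rightarrow> nat \<Rightarrow> real) \<Rightarrow> real \<Rightarrow> nat \<Rightarrow> (nat \<Rightarrow> real) \<Rightarrow> real" where "Dn w \<sigma> n \<theta> = Aw w n \<theta> / tau w \<sigma> n"
definition u0 :: "(nat \<Rightarrow> nat \<Rightarrow> real) \<Rightarrow> nat \<Rightarrow> real" where "u0 w n = w n 0 / cc w n"
definition Gn :: "(nat \<Rightarrow> nat \<Rightarrow> real) \<Rightarrow> nat \<Rightarrow> real \<Rightarrow> real" where
  "Gn w n z = measure gauss {y \<in> space gauss. Useries (uw w n) y \<le> z}"

locale wn =
  fixes w :: "nat \<Rightarrow> nat \<Rightarrow> real" and \<sigma> :: real and n :: nat
  assumes n: "1 \<le> n" and sig: "0 < \<sigma>" and nonneg: "\<And>j. 0 \<le> w n j" and summ: "summable (w n)"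
    and dec: "\<And>j. w n j \<le> w n 0" and N2pos: "0 < N2 w n"
begin

abbreviation "v \<equiv> w n"
definition "s = \<sigma> / sqrt (real n)"

lemma s_pos: "0 < s" using sig n by (simp add: s_def)
lemma s2: "s^2 = \<sigma>^2 / real n" using n by (simp add: s_def power_divide)
lemma cc_pos: "0 < cc w n" using N2pos by (simp add: cc_def)
lemma tau_pos: "0 < tau w \<sigma> n" using cc_pos sig n by (simp add: tau_def)
lemma tau_eq: "tau w \<sigma> n = s^2 * cc w n" by (simp add: tau_def s2)
lemma v0: "0 \<le> v 0" using nonneg .

lemma sum_vsq: "summable (\<lambda>j. (v j)^2)"
proof (rule summable_comparison_test[OF _ summable_mult[OF summ, of "v 0"]])
  show "\<exists>N. \<forall>j\<ge>N. norm ((v j)^2) \<le> v 0 * v j"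
    using nonneg dec by (auto simp: power2_eq_square intro!: mult_right_mono)
qed

lemma sum_vth:
  assumes "l2 \<theta>" shows "summable (\<lambda>j. v j * (\<theta> j)^2)"
proof (rule summable_comparison_test[OF _ summable_mult[OF assms[unfolded l2_def], of "v 0"]])
  show "\<exists>N. \<forall>j\<ge>N. norm (v j * (\<theta> j)^2) \<le> v 0 * (\<theta> j)^2"
    using nonneg dec by (auto intro!: mult_right_mono)
qed

lemma Aw_nonneg: "l2 \<theta> \<Longrightarrow> 0 \<le> Aw w n \<theta>"
  unfolding Aw_def using sum_vth nonneg by (intro suminf_nonneg) auto

lemma Dn_nonneg: "l2 \<theta> \<Longrightarrow> 0 \<le> Dn w \<sigma> n \<theta>"
  unfolding Dn_def using Aw_nonneg tau_pos by simp

lemma sum_v2th2: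
  assumes "l2 \<theta>" shows "summable (\<lambda>j. (v j * \<theta> j)^2)" and "(\<Sum>j. (v j * \<theta> j)^2) \<le> v 0 * Aw w n \<theta>"
proof -
  have le: "(v j * \<theta> j)^2 \<le> v 0 * (v j * (\<theta> j)^2)" for j
  proof -
    have "(v j * \<theta> j)^2 = v j * (v j * (\<theta> j)^2)" by (simp add: power2_eq_square)
    also have "\<dots> \<le> v 0 * (v j * (\<theta> j)^2)" using nonneg dec by (intro mult_right_mono) auto
    finally show ?thesis .
  qed
  show s: "summable (\<lambda>j. (v j * \<theta> j)^2)"
    by (rule summable_comparison_test[OF _ summable_mult[OF sum_vth[OF assms], of "v 0"]]) (use le in auto)
  show "(\<Sum>j. (v j * \<theta> j)^2) \<le> v 0 * Aw w n \<theta>"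
    unfolding Aw_def suminf_mult[OF sum_vth[OF assms], symmetric]
    by (rule suminf_le[OF le s summable_mult[OF sum_vth[OF assms]]])
qed

lemma decomp:
  assumes th: "l2 \<theta>" and good: "summable (\<lambda>j. v j * (x j)^2)"
  shows "summable (\<lambda>j. v j * \<theta> j * x j)"
    and "Tstat w \<sigma> n \<theta> x = tau w \<sigma> n * (Useries (uw w n) x + Dn w \<sigma> n \<theta> + 2 * s * (\<Sum>j. v j * \<theta> j * x j) / tau w \<sigma> n)"
proof -
  have b: "\<bar>v j * \<theta> j * x j\<bar> \<le> (v j * (\<theta> j)^2 + v j * (x j)^2) / 2" for j
  proof -
    have "2 * \<bar>\<theta> j * x j\<bar> \<le> (\<theta> j)^2 + (x j)^2"
      using sum_squares_bound[of "\<bar>\<theta> j\<bar>" "\<bar>x j\<bar>"] by (simp add: abs_mult power2_abs)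
    then have "v j * (2 * \<bar>\<theta> j * x j\<bar>) \<le> v j * ((\<theta> j)^2 + (x j)^2)" using nonneg by (intro mult_left_mono) auto
    then show ?thesis using nonneg[of j] by (simp add: abs_mult algebra_simps)
  qed
  show sB: "summable (\<lambda>j. v j * \<theta> j * x j)"
    by (rule summable_comparison_test[OF _ summable_divide[where c=2, OF summable_add[OF sum_vth[OF th] good]]]) (use b in auto)
  have sA: "summable (\<lambda>j. v j * (\<theta> j)^2)" by (rule sum_vth[OF th])
  have eqj: "v j * (\<theta> j + \<sigma> / sqrt (real n) * x j)^2 = v j * (\<theta> j)^2 + 2 * s * (v j * \<theta> j * x j) + s^2 * (v j * (x j)^2)" for j
    by (simp add: s_def[symmetric] power2_eq_square algebra_simps)
  define A where "A = Aw w n \<theta>"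
  define B where "B = (\<Sum>j. v j * \<theta> j * x j)"
  define Q where "Q = (\<Sum>j. v j * (x j)^2)"
  have L: "(\<Sum>j. v j * (\<theta> j + \<sigma> / sqrt (real n) * x j)^2) = A + 2 * s * B + s^2 * Q"
    unfolding eqj Aw_def A_def B_def Q_def
    by (subst suminf_add[symmetric], (intro summable_add summable_mult sA sB good)+,
        subst suminf_add[symmetric], (intro summable_mult sA sB good)+,
        simp add: suminf_mult[OF sB] suminf_mult[OF good])
  have U: "Useries (uw w n) x = (Q - rho w n) / cc w n"
  proof -
    have "Useries (uw w n) x = (\<Sum>j. (v j * (x j)^2 - v j) / cc w n)"
      unfolding Useries_def uw_def by (simp add: algebra_simps diff_divide_distrib)
    also have "\<dots> = (\<Sum>j. v j * (x j)^2 - v j) / cc w n"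
      by (rule suminf_divide[OF summable_diff[OF good summ]])
    also have "(\<Sum>j. v j * (x j)^2 - v j) = Q - rho w n"
      unfolding rho_def Q_def by (rule suminf_diff[OF good summ, symmetric])
    finally show ?thesis .
  qed
  have T: "Tstat w \<sigma> n \<theta> x = A + 2 * s * B + s^2 * Q - s^2 * rho w n"
    unfolding Tstat_def L s2 by simp
  have "tau w \<sigma> n * (Useries (uw w n) x + Dn w \<sigma> n \<theta> + 2 * s * B / tau w \<sigma> n)
      = s^2 * cc w n * ((Q - rho w n) / cc w n) + A + 2 * s * B"
    unfolding U Dn_def A_def[symmetric] tau_eq using cc_pos s_pos by (simp add: field_simps)
  also have "\<dots> = Tstat w \<sigma> n \<theta> x" unfolding T using cc_pos by (simp add: field_simps)
  finally show "Tstat w \<sigma> n \<theta> x = tau w \<sigma> n * (Useries (uw w n) x + Dn w \<sigma> n \<theta> + 2 * s * (\<Sum>j. v j * \<theta> j * x j) / tau w \<sigma> n)"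
    unfolding B_def by simp
qed

lemma AE_good: "AE x in gauss. summable (\<lambda>j. v j * (x j)^2)"
  by (rule AE_summable_sq[OF nonneg summ])

lemma Tstat_meas[measurable]: "Tstat w \<sigma> n \<theta> \<in> borel_measurable gauss"
  unfolding Tstat_def by measurable

lemma alpha_eq: "alpha_err w \<sigma> n t = 1 - Gn w n (t / tau w \<sigma> n)"
proof -
  have l20: "l2 (\<lambda>_. 0)" by (simp add: l2_def)
  have D0: "Dn w \<sigma> n (\<lambda>_. 0) = 0" by (simp add: Dn_def Aw_def)
  have "alpha_err w \<sigma> n t = measure gauss {x \<in> space gauss. t / tau w \<sigma> n < Useries (uw w n) x}"
    unfolding alpha_err_def
  proof (rule measure_eq_AE)
    show "AE x in gauss. (x \<in> {x \<in> space gauss. t < Tstat w \<sigma> n (\<lambda>_. 0) x}) = (x \<in> {x \<in> space gauss. t / tau w \<sigma> n < Useries (uw w n) x})"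
      using AE_good
    proof eventually_elim
      case (elim x)
      have "Tstat w \<sigma> n (\<lambda>_. 0) x = tau w \<sigma> n * Useries (uw w n) x"
        using decomp(2)[OF l20 elim] D0 by simp
      then show ?case using tau_pos by (simp add: divide_less_eq mult.commute)
    qed
  qed measurable
  also have "\<dots> = measure gauss (space gauss - {x \<in> space gauss. Useries (uw w n) x \<le> t / tau w \<sigma> n})"
    by (intro arg_cong[where f="measure gauss"]) auto
  also have "\<dots> = 1 - Gn w n (t / tau w \<sigma> n)"
    unfolding Gn_def by (rule G.prob_compl) measurable
  finally show ?thesis .
qed

lemma prob_lin_tail:
  assumes th: "l2 \<theta>" and d: "0 < d"
  shows "measure gauss {x \<in> space gauss. d \<le> \<bar>2 * s * (\<Sum>j. v j * \<theta> j * x j) / tau w \<sigma> n\<bar>}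
     \<le> 4 * u0 w n * Dn w \<sigma> n \<theta> / d^2"
proof -
  let ?c = "d * tau w \<sigma> n / (2 * s)"
  have c: "0 < ?c" using d tau_pos s_pos by simp
  have AEs: "AE x in gauss. summable (\<lambda>j. v j * \<theta> j * x j)"
    using AE_good by eventually_elim (rule decomp(1)[OF th])
  have eqset: "{x \<in> space gauss. d \<le> \<bar>2 * s * (\<Sum>j. v j * \<theta> j * x j) / tau w \<sigma> n\<bar>} = {x \<in> space gauss. ?c \<le> \<bar>\<Sum>j. (v j * \<theta> j) * x j\<bar>}"
    using tau_pos s_pos by (auto simp: abs_mult abs_divide field_simps)
  have "measure gauss {x \<in> space gauss. ?c \<le> \<bar>\<Sum>j. (v j * \<theta> j) * x j\<bar>} \<le> (\<Sum>j. (v j * \<theta> j)^2) / ?c^2"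
    by (rule chebyshev_lin[OF _ sum_v2th2(1)[OF th] c]) (use AEs in \<open>simp add: mult.assoc\<close>)
  also have "\<dots> \<le> v 0 * Aw w n \<theta> / ?c^2"
    by (rule divide_right_mono[OF sum_v2th2(2)[OF th]]) simp
  also have "\<dots> = 4 * u0 w n * Dn w \<sigma> n \<theta> / d^2"
    using tau_pos s_pos cc_pos d unfolding u0_def Dn_def tau_eq
    by (simp add: field_simps power2_eq_square)
  finally show ?thesis unfolding eqset .
qed

lemma beta_upper:
  assumes th: "l2 \<theta>" and D: "0 < Dn w \<sigma> n \<theta>"
  shows "beta_err w \<sigma> n \<theta> t \<le> Gn w n (t / tau w \<sigma> n - Dn w \<sigma> n \<theta> / 2) + 16 * u0 w n / Dn w \<sigma> n \<theta>"
proof -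
  let ?D = "Dn w \<sigma> n \<theta>" and ?z = "t / tau w \<sigma> n"
  let ?X = "\<lambda>x. 2 * s * (\<Sum>j. v j * \<theta> j * x j) / tau w \<sigma> n"
  let ?B = "{x \<in> space gauss. Useries (uw w n) x \<le> ?z - ?D / 2}"
  let ?C = "{x \<in> space gauss. ?D / 2 \<le> \<bar>?X x\<bar>}"
  have "beta_err w \<sigma> n \<theta> t \<le> measure gauss (?B \<union> ?C)"
    unfolding beta_err_def
  proof (rule G.finite_measure_mono_AE)
    show "AE x in gauss. x \<in> {x \<in> space gauss. Tstat w \<sigma> n \<theta> x \<le> t} \<longrightarrow> x \<in> ?B \<union> ?C"
      using AE_good
    proof eventually_elim
      case (elim x)
      show ?case
      proof
        assume "x \<in> {x \<in> space gauss. Tstat w \<sigma> n \<theta> x \<le> t}"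
        then have "tau w \<sigma> n * (Useries (uw w n) x + ?D + ?X x) \<le> t"
          using decomp(2)[OF th elim] by simp
        then have ineq: "Useries (uw w n) x + ?D + ?X x \<le> ?z" using tau_pos by (simp add: le_divide_eq mult.commute)
        show "x \<in> ?B \<union> ?C"
        proof (cases "?D / 2 \<le> \<bar>?X x\<bar>")
          case True then show ?thesis by (simp add: space_gauss)
        next
          case False
          have "- ?X x \<le> \<bar>?X x\<bar>" by (rule abs_ge_minus_self)
          then have "Useries (uw w n) x \<le> ?z - ?D / 2" using ineq False by linarith
          then show ?thesis by (simp add: space_gauss)
        qed
      qed
    qed
  qed measurable
  also have "\<dots> \<le> measure gauss ?B + measure gauss ?C" by (rule measure_Un_le) measurable
  also have "measure gauss ?C \<le> 4 * u0 w n * ?D / (?D/2)^2"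
    by (rule prob_lin_tail[OF th]) (use D in simp)
  also have "4 * u0 w n * ?D / (?D/2)^2 = 16 * u0 w n / ?D" using D by (simp add: field_simps power2_eq_square)
  finally show ?thesis unfolding Gn_def by simp
qed

lemma beta_lower:
  assumes th: "l2 \<theta>" and d: "0 < d"
  shows "Gn w n (t / tau w \<sigma> n - Dn w \<sigma> n \<theta> - d) - 4 * u0 w n * Dn w \<sigma> n \<theta> / d^2 \<le> beta_err w \<sigma> n \<theta> t"
proof -
  let ?D = "Dn w \<sigma> n \<theta>" and ?z = "t / tau w \<sigma> n"
  let ?X = "\<lambda>x. 2 * s * (\<Sum>j. v j * \<theta> j * x j) / tau w \<sigma> n"
  let ?A = "{x \<in> space gauss. Useries (uw w n) x \<le> ?z - ?D - d}"
  let ?B = "{x \<in> space gauss. Tstat w \<sigma> n \<theta> x \<le> t}"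
  let ?C = "{x \<in> space gauss. d \<le> \<bar>?X x\<bar>}"
  have "measure gauss ?A \<le> measure gauss (?B \<union> ?C)"
  proof (rule G.finite_measure_mono_AE)
    show "AE x in gauss. x \<in> ?A \<longrightarrow> x \<in> ?B \<union> ?C"
      using AE_good
    proof eventually_elim
      case (elim x)
      show ?case
      proof
        assume A: "x \<in> ?A"
        show "x \<in> ?B \<union> ?C"
        proof (cases "d \<le> \<bar>?X x\<bar>")
          case False
          have "?X x \<le> \<bar>?X x\<bar>" by (rule abs_ge_self)
          moreover have "Useries (uw w n) x \<le> ?z - ?D - d" using A by simp
          ultimately have "Useries (uw w n) x + ?D + ?X x \<le> ?z" using False by linarith
          then have "tau w \<sigma> n * (Useries (uw w n) x + ?D + ?X x) \<le> t"
            using tau_pos by (simp add: le_divide_eq mult.commute)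
          then show ?thesis using decomp(2)[OF th elim] by (simp add: space_gauss)
        qed (simp add: space_gauss)
      qed
    qed
  qed measurable
  also have "\<dots> \<le> measure gauss ?B + measure gauss ?C" by (rule measure_Un_le) measurable
  also have "measure gauss ?C \<le> 4 * u0 w n * ?D / d^2" by (rule prob_lin_tail[OF th d])
  finally show ?thesis unfolding Gn_def beta_err_def by simp
qed

end

locale glob =
  fixes w :: "nat \<Rightarrow> nat \<Rightarrow> real" and \<sigma> r :: real
  assumes sigma: "0 < \<sigma>"
    and r: "0 < r" "r < 1/2"
    and weights: "\<forall>n\<ge>1. (\<forall>j. 0 \<le> w n j) \<and> summable (w n)"
    and A1: "\<forall>n\<ge>1. \<forall>j. w n (Suc j) \<le> w n j"
    and A2: "\<exists>C1 C2. 0 < C1 \<and> (\<forall>n\<ge>1. C1 < real n ^ 2 / \<sigma> ^ 4 * (\<Sum>j. (w n j)\<^sup>2)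
                                      \<and> real n ^ 2 / \<sigma> ^ 4 * (\<Sum>j. (w n j)\<^sup>2) < C2)"
    and A3: "\<exists>c1 c2. 0 < c1 \<and> (\<forall>n\<ge>1. c1 * real n powr (-2*r) \<le> rho w n
                                      \<and> rho w n \<le> c2 * real n powr (-2*r))"
    and A5a: "\<exists>c C. 0 < c \<and> (\<forall>n\<ge>1. c * kap w n \<le> w n 0 \<and> w n 0 \<le> C * kap w n)"
begin

lemma nonneg: "1 \<le> n \<Longrightarrow> 0 \<le> w n j" using weights by auto
lemma summ: "1 \<le> n \<Longrightarrow> summable (w n)" using weights by auto
lemma mono: "1 \<le> n \<Longrightarrow> i \<le> j \<Longrightarrow> w n j \<le> w n i"
proof -
  assume n: "1 \<le> n" and ij: "i \<le> j"
  have "decseq (w n)" by (rule decseq_SucI) (use A1 n in auto)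
  then show ?thesis using ij by (simp add: decseq_def)
qed

lemma N2pos: "1 \<le> n \<Longrightarrow> 0 < N2 w n"
proof -
  assume n: "1 \<le> n"
  obtain C1 C2 where C: "0 < C1" "\<forall>n\<ge>1. C1 < real n ^ 2 / \<sigma> ^ 4 * (\<Sum>j. (w n j)\<^sup>2)" using A2 by auto
  have h: "0 < real n ^ 2 / \<sigma> ^ 4 * N2 w n" using C n unfolding N2_def by force
  moreover have "0 < real n ^ 2 / \<sigma> ^ 4" using n sigma by simp
  ultimately show ?thesis by (rule zero_less_mult_pos)
qed

lemma wn: "1 \<le> n \<Longrightarrow> wn w \<sigma> n"
  by unfold_locales (auto simp: sigma nonneg summ mono N2pos)

lemma rho_pos: "1 \<le> n \<Longrightarrow> 0 < rho w n"
proof -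
  assume n: "1 \<le> n"
  obtain c1 c2 where c: "0 < c1" "\<forall>n\<ge>1. c1 * real n powr (-2*r) \<le> rho w n" using A3 by auto
  have "0 < c1 * real n powr (-2*r)" using c n by simp
  moreover have "c1 * real n powr (-2*r) \<le> rho w n" using c n by auto
  ultimately show ?thesis by linarith
qed

lemma kn_props:
  assumes n: "1 \<le> n"
  shows "1 \<le> kn w n" "rho w n / 2 < (\<Sum>j<kn w n. w n j)"
proof -
  let ?S = "{k::nat. 1 \<le> k \<and> (\<Sum>m\<in>{1..<k}. w n (m - 1)) \<le> rho w n / 2}"
  have ps: "(\<Sum>m\<in>{1..<k}. w n (m - 1)) = (\<Sum>j<k - 1. w n j)" for k
  proof (cases k)
    case (Suc k')
    have "{1..<k} = {0+1..<k'+1}" using Suc by simp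
    then have "(\<Sum>m\<in>{1..<k}. w n (m - 1)) = (\<Sum>i\<in>{0..<k'}. w n (i + 1 - 1))"
      by (simp only: sum.shift_bounds_nat_ivl)
    then show ?thesis using Suc by (simp add: atLeast0LessThan)
  qed simp
  have rp: "0 < rho w n" by (rule rho_pos[OF n])
  have "(\<lambda>K. \<Sum>j<K. w n j) \<longlonglongrightarrow> rho w n" unfolding rho_def by (rule summable_LIMSEQ[OF summ[OF n]])
  then have "eventually (\<lambda>K. rho w n / 2 < (\<Sum>j<K. w n j)) sequentially"
    by (rule order_tendstoD) (use rp in simp)
  then obtain K where K: "rho w n / 2 < (\<Sum>j<K. w n j)" by (auto simp: eventually_sequentially)
  have bound: "k \<le> K" if "k \<in> ?S" for k
  proof (rule ccontr)
    assume "\<not> k \<le> K"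
    then have "(\<Sum>j<K. w n j) \<le> (\<Sum>j<k - 1. w n j)"
      by (intro sum_mono2) (auto simp: nonneg[OF n])
    moreover have "(\<Sum>j<k - 1. w n j) \<le> rho w n / 2" using that unfolding ps by simp
    ultimately show False using K by linarith
  qed
  have fin: "finite ?S" by (rule finite_subset[of _ "{..K}"]) (use bound in auto)
  have one: "1 \<in> ?S" using rp by simp
  have ne: "?S \<noteq> {}" using one by blast
  have knM: "kn w n = Max ?S" unfolding kn_def by (rule cSup_eq_Max[OF fin ne])
  have kS: "kn w n \<in> ?S" unfolding knM by (rule Max_in[OF fin ne])
  then show "1 \<le> kn w n" by simp
  have "Suc (kn w n) \<notin> ?S"
  proof
    assume "Suc (kn w n) \<in> ?S"
    then have "Suc (kn w n) \<le> Max ?S" by (rule Max_ge[OF fin])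
    then show False unfolding knM[symmetric] by simp
  qed
  moreover have "1 \<le> Suc (kn w n)" by simp
  ultimately have "\<not> (\<Sum>m\<in>{1..<Suc (kn w n)}. w n (m - 1)) \<le> rho w n / 2" by blast
  then show "rho w n / 2 < (\<Sum>j<kn w n. w n j)" unfolding ps by simp
qed

lemma u0_bound:
  assumes n: "1 \<le> n"
  obtains K where "\<And>n. 1 \<le> n \<Longrightarrow> u0 w n \<le> K * real n powr (2 * r - 1)"
proof -
  obtain c C where cC: "0 < c" "\<forall>n\<ge>1. c * kap w n \<le> w n 0 \<and> w n 0 \<le> C * kap w n" using A5a by auto
  obtain C1 C2 where C12: "0 < C1" "\<forall>n\<ge>1. C1 < real n ^ 2 / \<sigma> ^ 4 * (\<Sum>j. (w n j)\<^sup>2) \<and> real n ^ 2 / \<sigma> ^ 4 * (\<Sum>j. (w n j)\<^sup>2) < C2"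
    using A2 by auto
  obtain c1 c2 where c12: "0 < c1" "\<forall>n\<ge>1. c1 * real n powr (-2*r) \<le> rho w n" using A3 by auto
  define C' where "C' = max C 1"
  define K where "K = C'^2 * sqrt 2 * sqrt C2 * \<sigma>^2 / c1"
  show ?thesis
  proof (rule that)
    fix n :: nat assume n: "1 \<le> n"
    have N2p: "0 < N2 w n" using N2pos[OF n] .
    interpret wn w \<sigma> n by (rule wn[OF n])
    let ?k = "kn w n" and ?kap = "kap w n"
    have kap0: "0 \<le> ?kap" unfolding kap_def by (rule nonneg)
    have w0C: "w n 0 \<le> C' * ?kap"
    proof -
      have "w n 0 \<le> C * ?kap" using cC n by auto
      also have "\<dots> \<le> C' * ?kap" unfolding C'_def by (rule mult_right_mono[OF _ kap0]) simp
      finally show ?thesis .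
    qed
    have C'1: "1 \<le> C'" unfolding C'_def by simp
    note kp = kn_props[OF n]
    have ge: "?kap \<le> w n j" if "j < ?k" for j unfolding kap_def by (rule mono[OF n]) (use that in simp)
    have r1: "rho w n / 2 < real ?k * w n 0"
    proof -
      have "(\<Sum>j<?k. w n j) \<le> (\<Sum>j<?k. w n 0)" by (intro sum_mono) (rule mono[OF n], simp)
      then show ?thesis using kp(2) by simp
    qed
    have N2k: "real ?k * ?kap^2 \<le> N2 w n"
    proof -
      have "real ?k * ?kap^2 = (\<Sum>j<?k. ?kap^2)" by simp
      also have "\<dots> \<le> (\<Sum>j<?k. (w n j)^2)" by (intro sum_mono power_mono) (use ge kap0 in auto)
      also have "\<dots> \<le> N2 w n" unfolding N2_def by (rule sum_le_suminf[OF sum_vsq]) auto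
      finally show ?thesis .
    qed
    have rp: "0 < rho w n" by (rule rho_pos[OF n])
    have w0pos: "0 < w n 0"
    proof -
      have "0 < real ?k * w n 0" using r1 rp by linarith
      moreover have "0 < real ?k" using kp(1) by simp
      ultimately show ?thesis by (rule zero_less_mult_pos)
    qed
    have "rho w n * w n 0 / 2 < real ?k * (w n 0)^2"
      using mult_strict_right_mono[OF r1 w0pos] by (simp add: power2_eq_square mult.assoc)
    also have "\<dots> \<le> real ?k * (C' * ?kap)^2"
      by (intro mult_left_mono power_mono w0C) (use w0pos in auto)
    also have "\<dots> = C'^2 * (real ?k * ?kap^2)" by (simp add: power_mult_distrib)
    also have "\<dots> \<le> C'^2 * N2 w n" by (intro mult_left_mono N2k) simp
    finally have w0b: "w n 0 \<le> 2 * C'^2 * N2 w n / rho w n" using rp by (simp add: field_simps)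
    have N2b: "N2 w n < C2 * \<sigma>^4 / (real n)^2"
      using C12(2) n sigma unfolding N2_def by (auto simp: field_simps)
    have sq: "sqrt (N2 w n) \<le> sqrt C2 * \<sigma>^2 / real n"
    proof -
      have "sqrt (N2 w n) \<le> sqrt (C2 * \<sigma>^4 / (real n)^2)" using N2b by simp
      also have "\<dots> = sqrt C2 * \<sigma>^2 / real n"
      proof -
        have "\<sigma>^4 = (\<sigma>^2)^2" by (simp flip: power_mult)
        then have "sqrt (\<sigma>^4) = \<bar>\<sigma>^2\<bar>" by (simp only: real_sqrt_abs)
        then have "sqrt (\<sigma>^4) = \<sigma>^2" by simp
        then show ?thesis using n by (simp add: real_sqrt_mult real_sqrt_divide)
      qed
      finally show ?thesis .
    qed
    have "u0 w n = w n 0 / (sqrt 2 * sqrt (N2 w n))" unfolding u0_def cc_def by (simp add: real_sqrt_mult)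
    also have "\<dots> \<le> 2 * C'^2 * N2 w n / rho w n / (sqrt 2 * sqrt (N2 w n))"
      by (intro divide_right_mono w0b) (use N2p in simp)
    also have "\<dots> = C'^2 * sqrt 2 * sqrt (N2 w n) / rho w n"
    proof -
      define a where "a = sqrt 2"
      define q where "q = sqrt (N2 w n)"
      have a: "0 < a" "2 = a * a" unfolding a_def by simp_all
      have q: "0 < q" "N2 w n = q * q" unfolding q_def using N2p by simp_all
      show ?thesis unfolding a_def[symmetric] q_def[symmetric]
        apply (subst (1) a(2)) apply (subst q(2))
        using a q rp by (simp add: field_simps)
    qed
    also have "\<dots> \<le> C'^2 * sqrt 2 * (sqrt C2 * \<sigma>^2 / real n) / rho w n"
      by (intro divide_right_mono mult_left_mono sq) (use rp in auto)
    also have "\<dots> \<le> C'^2 * sqrt 2 * (sqrt C2 * \<sigma>^2 / real n) / (c1 * real n powr (-2*r))"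
    proof (rule divide_left_mono)
      show "c1 * real n powr (-2*r) \<le> rho w n" using c12 n by auto
      have "0 \<le> C2"
      proof -
        have "0 < real n ^ 2 / \<sigma> ^ 4 * (\<Sum>j. (w n j)\<^sup>2)" using N2p n sigma unfolding N2_def by simp
        then show ?thesis using C12(2) n by force
      qed
      then show "0 \<le> C'^2 * sqrt 2 * (sqrt C2 * \<sigma>^2 / real n)" by simp
      show "0 < rho w n * (c1 * real n powr (-2*r))" using rp c12(1) n by simp
    qed
    also have "\<dots> = K * real n powr (2 * r - 1)"
    proof -
      have e1: "real n powr (2*r - 1) = real n powr (2*r) / real n" using n by (simp add: powr_diff)
      have e2: "real n powr (-2*r) = 1 / real n powr (2*r)" using n by (simp add: powr_minus divide_inverse)
      have p: "0 < real n powr (2*r)" using n by simp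
      show ?thesis unfolding K_def e1 e2 using n c12(1) p by (simp add: field_simps)
    qed
    finally show "u0 w n \<le> K * real n powr (2 * r - 1)" .
  qed
qed

end

context glob begin

lemma u0_nonneg: "1 \<le> n \<Longrightarrow> 0 \<le> u0 w n"
proof -
  assume n: "1 \<le> n"
  interpret wn w \<sigma> n by (rule wn[OF n])
  show ?thesis unfolding u0_def using cc_pos nonneg by simp
qed

lemma u0_tendsto: "(u0 w) \<longlonglongrightarrow> 0"
proof -
  obtain K where K: "\<And>n. 1 \<le> n \<Longrightarrow> u0 w n \<le> K * real n powr (2 * r - 1)"
    by (rule u0_bound[of 1]) auto
  have "(\<lambda>n. K * real n powr (2 * r - 1)) \<longlonglongrightarrow> K * 0"
  proof (intro tendsto_intros)
    show "(\<lambda>n. real n powr (2 * r - 1)) \<longlonglongrightarrow> 0"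
      using r by (intro tendsto_neg_powr filterlim_real_sequentially) simp
  qed
  then have l: "(\<lambda>n. K * real n powr (2 * r - 1)) \<longlonglongrightarrow> 0" by simp
  show ?thesis
  proof (rule tendsto_sandwich[OF _ _ tendsto_const l])
    show "eventually (\<lambda>n. 0 \<le> u0 w n) sequentially"
      using eventually_ge_at_top[of 1] by eventually_elim (rule u0_nonneg)
    show "eventually (\<lambda>n. u0 w n \<le> K * real n powr (2 * r - 1)) sequentially"
      using eventually_ge_at_top[of 1] by eventually_elim (rule K)
  qed
qed

lemma Gn_tendsto: "(\<lambda>n. Gn w (Suc n) x) \<longlonglongrightarrow> Phi x"
proof -
  have "(\<lambda>n. measure gauss {y \<in> space gauss. Useries (uw w (Suc n)) y \<le> x}) \<longlonglongrightarrow> Phi x"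
  proof (rule clt_weights[where umax="\<lambda>n. u0 w (Suc n)"])
    fix n j
    interpret wn w \<sigma> "Suc n" by (rule wn) simp
    show "0 \<le> uw w (Suc n) j" unfolding uw_def using nonneg cc_pos by simp
    show "uw w (Suc n) j \<le> u0 w (Suc n)" unfolding uw_def u0_def using dec cc_pos by (simp add: divide_right_mono)
    show "summable (uw w (Suc n))" unfolding uw_def by (rule summable_divide[OF summ])
    have "(\<Sum>j. (uw w (Suc n) j)^2) = (\<Sum>j. (w (Suc n) j)^2 / (cc w (Suc n))^2)"
      unfolding uw_def by (simp add: power_divide)
    also have "\<dots> = N2 w (Suc n) / (cc w (Suc n))^2" unfolding N2_def by (rule suminf_divide[OF sum_vsq])
    also have "\<dots> = 1/2" unfolding cc_def using N2pos by simp
    finally show "(\<Sum>j. (uw w (Suc n) j)^2) = 1/2" .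
  next
    show "(\<lambda>n. u0 w (Suc n)) \<longlonglongrightarrow> 0" using u0_tendsto by (rule LIMSEQ_Suc)
  qed
  then show ?thesis unfolding Gn_def .
qed

lemma Gn_mono: "x \<le> y \<Longrightarrow> Gn w n x \<le> Gn w n y"
  unfolding Gn_def by (intro G.finite_measure_mono) auto

lemma Gn_bounds: "0 \<le> Gn w n x" "Gn w n x \<le> 1"
  unfolding Gn_def by auto

lemma Gn_unif:
  assumes e: "0 < e"
  shows "eventually (\<lambda>n. \<forall>z. \<bar>Gn w n z - Phi z\<bar> \<le> e) sequentially"
proof -
  have "eventually (\<lambda>n. \<forall>z. \<bar>Gn w (Suc n) z - Phi z\<bar> \<le> e) sequentially"
    by (rule polya_unif[where F="\<lambda>n. Gn w (Suc n)"]) (simp_all add: Gn_mono Gn_bounds Gn_tendsto e)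
  then show ?thesis by (rule eventually_sequentially_Suc[THEN iffD1])
qed

end

lemma liminf_ge_one:
  fixes X :: "nat \<Rightarrow> real"
  assumes H: "\<And>e. 0 < e \<Longrightarrow> eventually (\<lambda>i. 1 - e \<le> X i) sequentially"
  shows "1 \<le> liminf (\<lambda>i. ereal (X i))"
proof (subst le_Liminf_iff, intro allI impI)
  fix y :: ereal assume y: "y < 1"
  show "eventually (\<lambda>x. y < ereal (X x)) sequentially"
  proof (cases y)
    case (real q)
    then have q: "q < 1" using y by simp
    have "eventually (\<lambda>i. 1 - (1 - q) / 2 \<le> X i) sequentially" by (rule H) (use q in simp)
    then show ?thesis
    proof eventually_elim
      case (elim i) then have "q < X i" using q by (simp add: field_simps)
      then show ?case using real by simp
    qed
  next
    case PInf then show ?thesis using y by simp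
  next
    case MInf then show ?thesis by simp
  qed
qed

lemma not_liminf_ge_one:
  fixes X :: "nat \<Rightarrow> real"
  assumes F: "frequently (\<lambda>i. X i \<le> c) sequentially" and c: "c < 1"
  shows "\<not> 1 \<le> liminf (\<lambda>i. ereal (X i))"
proof
  assume "1 \<le> liminf (\<lambda>i. ereal (X i))"
  moreover have "ereal c < 1" using c by simp
  ultimately have "ereal c < liminf (\<lambda>i. ereal (X i))" by (rule less_le_trans[rotated])
  then have "eventually (\<lambda>i. ereal c < ereal (X i)) sequentially" by (rule less_LiminfD)
  then have "eventually (\<lambda>i. \<not> X i \<le> c) sequentially" by eventually_elim simp
  then show False using F by (simp add: frequently_def)
qed

lemma subseq_ge1: "subseq_idx ns \<Longrightarrow> 1 \<le> ns i"
  unfolding subseq_idx_def by (metis le_trans strict_mono_less_eq zero_le)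

lemma ev_subseq: "subseq_idx ns \<Longrightarrow> eventually P sequentially \<Longrightarrow> eventually (\<lambda>i. P (ns i)) sequentially"
  unfolding subseq_idx_def using filterlim_subseq filterlim_iff by metis

lemma tendsto_subseq': "subseq_idx ns \<Longrightarrow> f \<longlonglongrightarrow> l \<Longrightarrow> (\<lambda>i. f (ns i)) \<longlonglongrightarrow> l"
  unfolding subseq_idx_def using filterlim_subseq filterlim_compose by metis

context glob begin

lemma inconsistent_of_D0:
  assumes ns: "subseq_idx ns" and g: "\<And>i. l2 (g i)"
    and D: "(\<lambda>i. Dn w \<sigma> (ns i) (g i)) \<longlonglongrightarrow> 0"
  shows "inconsistent w \<sigma> ns g"
  unfolding inconsistent_def
proof
  fix t :: "nat \<Rightarrow> real"
  show "1 \<le> liminf (\<lambda>i. ereal (alpha_err w \<sigma> (ns i) (t i) + beta_err w \<sigma> (ns i) (g i) (t i)))"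
  proof (rule liminf_ge_one)
    fix e :: real assume e: "0 < e"
    let ?d = "e / 4"
    have e1: "eventually (\<lambda>i. \<forall>z. \<bar>Gn w (ns i) z - Phi z\<bar> \<le> e / 8) sequentially"
      by (rule ev_subseq[OF ns Gn_unif]) (use e in simp)
    have e2: "eventually (\<lambda>i. Dn w \<sigma> (ns i) (g i) < e / 4) sequentially"
      by (rule order_tendstoD(2)[OF D]) (use e in simp)
    have "(\<lambda>i. 4 * u0 w (ns i) * Dn w \<sigma> (ns i) (g i) / ?d^2) \<longlonglongrightarrow> 4 * 0 * 0 / ?d^2"
      by (intro tendsto_intros tendsto_subseq'[OF ns u0_tendsto] D) (use e in simp)
    then have e3: "eventually (\<lambda>i. 4 * u0 w (ns i) * Dn w \<sigma> (ns i) (g i) / ?d^2 < e / 4) sequentially"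
      by (rule order_tendstoD(2)) (use e in simp)
    show "eventually (\<lambda>i. 1 - e \<le> alpha_err w \<sigma> (ns i) (t i) + beta_err w \<sigma> (ns i) (g i) (t i)) sequentially"
      using e1 e2 e3
    proof eventually_elim
      case (elim i)
      define m where "m = ns i"
      have m: "1 \<le> m" unfolding m_def by (rule subseq_ge1[OF ns])
      interpret wn w \<sigma> m by (rule wn[OF m])
      let ?z = "t i / tau w \<sigma> m" and ?D = "Dn w \<sigma> m (g i)"
      have D0: "0 \<le> ?D" by (rule Dn_nonneg[OF g])
      have a: "alpha_err w \<sigma> m (t i) = 1 - Gn w m ?z" by (rule alpha_eq)
      have b: "Gn w m (?z - ?D - ?d) - 4 * u0 w m * ?D / ?d^2 \<le> beta_err w \<sigma> m (g i) (t i)"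
        by (rule beta_lower[OF g]) (use e in simp)
      have "\<bar>Gn w m ?z - Phi ?z\<bar> \<le> e / 8" using elim(1) unfolding m_def[symmetric] by blast
      then have g1: "Gn w m ?z \<le> Phi ?z + e / 8" by (simp only: abs_le_iff) linarith
      have "\<bar>Gn w m (?z - ?D - ?d) - Phi (?z - ?D - ?d)\<bar> \<le> e / 8" using elim(1) unfolding m_def[symmetric] by blast
      then have g2: "Phi (?z - ?D - ?d) - e / 8 \<le> Gn w m (?z - ?D - ?d)" by (simp only: abs_le_iff) linarith
      have p: "Phi ?z - Phi (?z - ?D - ?d) \<le> ?D + ?d"
        using Phi_diff_le[of "?z - ?D - ?d" ?z] D0 e by simp
      show ?case using a b g1 g2 p elim(2,3) unfolding m_def[symmetric] by linarith
    qed
  qed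
qed

lemma D0_of_inconsistent:
  assumes ns: "subseq_idx ns" and g: "\<And>i. l2 (g i)"
    and inc: "inconsistent w \<sigma> ns g"
  shows "(\<lambda>i. Dn w \<sigma> (ns i) (g i)) \<longlonglongrightarrow> 0"
proof (rule ccontr)
  assume nt: "\<not> ?thesis"
  have D0: "0 \<le> Dn w \<sigma> (ns i) (g i)" for i
  proof -
    interpret wn w \<sigma> "ns i" by (rule wn[OF subseq_ge1[OF ns]])
    show ?thesis by (rule Dn_nonneg[OF g])
  qed
  obtain \<epsilon> where \<epsilon>: "0 < \<epsilon>" and fr: "frequently (\<lambda>i. \<epsilon> \<le> Dn w \<sigma> (ns i) (g i)) sequentially"
  proof -
    have "\<not> (\<forall>\<epsilon>>0. eventually (\<lambda>i. Dn w \<sigma> (ns i) (g i) < \<epsilon>) sequentially)"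
    proof
      assume H: "\<forall>\<epsilon>>0. eventually (\<lambda>i. Dn w \<sigma> (ns i) (g i) < \<epsilon>) sequentially"
      have "(\<lambda>i. Dn w \<sigma> (ns i) (g i)) \<longlonglongrightarrow> 0"
      proof (rule order_tendstoI)
        fix a :: real assume "a < 0"
        then show "eventually (\<lambda>i. a < Dn w \<sigma> (ns i) (g i)) sequentially"
          using D0 by (intro always_eventually) (auto intro: less_le_trans)
      qed (use H in auto)
      then show False using nt by simp
    qed
    then obtain \<epsilon> where "0 < \<epsilon>" "\<not> eventually (\<lambda>i. Dn w \<sigma> (ns i) (g i) < \<epsilon>) sequentially" by auto
    then show ?thesis using that by (auto simp: frequently_def not_le)
  qed
  let ?h = "\<epsilon> / 2"
  define \<gamma> where "\<gamma> = ?h * std_normal_density ?h"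
  have \<gamma>: "0 < \<gamma>" unfolding \<gamma>_def using \<epsilon> by (simp add: normal_density_pos)
  have Pd: "\<gamma> \<le> Phi 0 - Phi (- ?h)"
    using Phi_diff_ge[of "- ?h" 0 ?h] \<epsilon> unfolding \<gamma>_def by simp
  have e1: "eventually (\<lambda>i. \<forall>z. \<bar>Gn w (ns i) z - Phi z\<bar> \<le> \<gamma> / 8) sequentially"
    by (rule ev_subseq[OF ns Gn_unif]) (use \<gamma> in simp)
  have "(\<lambda>i. 16 * u0 w (ns i) / \<epsilon>) \<longlonglongrightarrow> 16 * 0 / \<epsilon>"
    by (intro tendsto_intros tendsto_subseq'[OF ns u0_tendsto]) (use \<epsilon> in simp)
  then have e2: "eventually (\<lambda>i. 16 * u0 w (ns i) / \<epsilon> < \<gamma> / 4) sequentially"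
    by (rule order_tendstoD(2)) (use \<gamma> in simp)
  have evimp: "eventually (\<lambda>i. \<epsilon> \<le> Dn w \<sigma> (ns i) (g i) \<longrightarrow> alpha_err w \<sigma> (ns i) 0 + beta_err w \<sigma> (ns i) (g i) 0 \<le> 1 - \<gamma> / 2) sequentially"
    using e1 e2
  proof eventually_elim
    case (elim i)
    show ?case
    proof
      assume De: "\<epsilon> \<le> Dn w \<sigma> (ns i) (g i)"
      note G = elim(1) and U = elim(2)
      define m where "m = ns i"
      have m: "1 \<le> m" unfolding m_def by (rule subseq_ge1[OF ns])
      interpret wn w \<sigma> m by (rule wn[OF m])
      let ?D = "Dn w \<sigma> m (g i)"
      have Dp: "0 < ?D" using De \<epsilon> unfolding m_def by simp
      have a: "alpha_err w \<sigma> m 0 = 1 - Gn w m 0" using alpha_eq[of 0] by simp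
      have b: "beta_err w \<sigma> m (g i) 0 \<le> Gn w m (0 - ?D / 2) + 16 * u0 w m / ?D"
        using beta_upper[OF g Dp, of 0] by simp
      have b2: "Gn w m (0 - ?D / 2) \<le> Gn w m (- ?h)" by (rule Gn_mono) (use De in \<open>simp add: m_def\<close>)
      have b3: "16 * u0 w m / ?D \<le> 16 * u0 w m / \<epsilon>"
        by (rule divide_left_mono) (use De \<epsilon> u0_nonneg[OF m] in \<open>auto simp: m_def\<close>)
      have "\<bar>Gn w m 0 - Phi 0\<bar> \<le> \<gamma> / 8" using G unfolding m_def[symmetric] by blast
      then have g1: "Phi 0 - \<gamma> / 8 \<le> Gn w m 0" by (simp only: abs_le_iff) linarith
      have "\<bar>Gn w m (- ?h) - Phi (- ?h)\<bar> \<le> \<gamma> / 8" using G unfolding m_def[symmetric] by blast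
      then have g2: "Gn w m (- ?h) \<le> Phi (- ?h) + \<gamma> / 8" by (simp only: abs_le_iff) linarith
      show "alpha_err w \<sigma> (ns i) 0 + beta_err w \<sigma> (ns i) (g i) 0 \<le> 1 - \<gamma> / 2"
        using a b b2 b3 g1 g2 Pd U unfolding m_def[symmetric] by linarith
    qed
  qed
  have "frequently (\<lambda>i. alpha_err w \<sigma> (ns i) 0 + beta_err w \<sigma> (ns i) (g i) 0 \<le> 1 - \<gamma> / 2) sequentially"
    by (rule frequently_rev_mp[OF fr evimp])
  then have "\<not> 1 \<le> liminf (\<lambda>i. ereal (alpha_err w \<sigma> (ns i) ((\<lambda>_. 0) i) + beta_err w \<sigma> (ns i) (g i) ((\<lambda>_. 0) i)))"
    by (rule not_liminf_ge_one) (simp, use \<gamma> in linarith)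
  moreover have "1 \<le> liminf (\<lambda>i. ereal (alpha_err w \<sigma> (ns i) ((\<lambda>_. 0) i) + beta_err w \<sigma> (ns i) (g i) ((\<lambda>_. 0) i)))"
    using inc unfolding inconsistent_def by (rule spec)
  ultimately show False by simp
qed

end

context glob begin

lemma consistent_of_Dpos:
  assumes f: "\<And>n. l2 (f n)" and \<epsilon>: "0 < \<epsilon>"
    and ev: "eventually (\<lambda>n. \<epsilon> \<le> Dn w \<sigma> n (f n)) sequentially"
  shows "consistent w \<sigma> id f"
  unfolding consistent_def
proof (intro allI impI)
  fix a :: real and t :: "nat \<Rightarrow> real"
  assume a: "0 < a \<and> a < 1" and ta: "(\<lambda>i. alpha_err w \<sigma> (id i) (t i) / a) \<longlonglongrightarrow> 1"
  have a0: "0 < a" and a1: "a < 1" using a by auto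
  have alim: "(\<lambda>i. alpha_err w \<sigma> i (t i)) \<longlonglongrightarrow> a"
  proof -
    have "(\<lambda>i. alpha_err w \<sigma> (id i) (t i) / a * a) \<longlonglongrightarrow> 1 * a" by (intro tendsto_intros ta)
    then show ?thesis using a0 by simp
  qed
  let ?h = "\<epsilon> / 2"
  obtain K1 where K1: "\<And>x. x \<le> K1 \<Longrightarrow> 2 * Phi x < 1 - a"
  proof -
    have "eventually (\<lambda>x. Phi x < (1 - a) / 2) at_bot" by (rule order_tendstoD(2)[OF Phi_bot]) (use a1 in simp)
    then show ?thesis using that by (auto simp: eventually_at_bot_linorder field_simps)
  qed
  obtain K2 where K2: "\<And>x. K2 \<le> x \<Longrightarrow> 2 - a < 2 * Phi x"
  proof -
    have "eventually (\<lambda>x. 1 - a / 2 < Phi x) at_top" by (rule order_tendstoD(1)[OF Phi_top]) (use a0 in simp)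
    then show ?thesis using that by (auto simp: eventually_at_top_linorder field_simps)
  qed
  define K where "K = max (- K1) K2"
  define \<Gamma> where "\<Gamma> = ?h * std_normal_density (K + ?h)"
  have \<Gamma>: "0 < \<Gamma>" unfolding \<Gamma>_def using \<epsilon> by (simp add: normal_density_pos)
  define \<zeta> where "\<zeta> = min (min (a / 4) ((1 - a) / 4)) (\<Gamma> / 8)"
  have \<zeta>: "0 < \<zeta>" "4 * \<zeta> \<le> a" "4 * \<zeta> \<le> 1 - a" "8 * \<zeta> \<le> \<Gamma>" unfolding \<zeta>_def using a0 a1 \<Gamma> by (auto simp: min_def)
  have E1: "eventually (\<lambda>n. \<forall>z. \<bar>Gn w n z - Phi z\<bar> \<le> \<zeta>) sequentially" by (rule Gn_unif[OF \<zeta>(1)])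
  have E2: "eventually (\<lambda>n. \<bar>alpha_err w \<sigma> n (t n) - a\<bar> < \<zeta>) sequentially"
  proof -
    have "(\<lambda>n. \<bar>alpha_err w \<sigma> n (t n) - a\<bar>) \<longlonglongrightarrow> \<bar>a - a\<bar>" by (intro tendsto_intros alim)
    then show ?thesis by (rule order_tendstoD(2)) (use \<zeta> in simp)
  qed
  have E3: "eventually (\<lambda>n. 16 * u0 w n / \<epsilon> < \<Gamma> / 4) sequentially"
  proof -
    have "(\<lambda>n. 16 * u0 w n / \<epsilon>) \<longlonglongrightarrow> 16 * 0 / \<epsilon>" by (intro tendsto_intros u0_tendsto) (use \<epsilon> in simp)
    then show ?thesis by (rule order_tendstoD(2)) (use \<Gamma> in simp)
  qed
  have "eventually (\<lambda>n. beta_err w \<sigma> n (f n) (t n) \<le> 1 - a - \<Gamma> / 4) sequentially"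
    using E1 E2 E3 ev eventually_ge_at_top[of 1]
  proof eventually_elim
    case (elim n)
    note G = elim(1) and A = elim(2) and U = elim(3) and De = elim(4) and n = elim(5)
    interpret wn w \<sigma> n by (rule wn[OF n])
    let ?z = "t n / tau w \<sigma> n" and ?D = "Dn w \<sigma> n (f n)"
    have Dp: "0 < ?D" using De \<epsilon> by simp
    have al: "alpha_err w \<sigma> n (t n) = 1 - Gn w n ?z" by (rule alpha_eq)
    have "\<bar>Gn w n ?z - Phi ?z\<bar> \<le> \<zeta>" using G by blast
    then have gz: "Gn w n ?z - \<zeta> \<le> Phi ?z" "Phi ?z \<le> Gn w n ?z + \<zeta>" by (simp_all only: abs_le_iff) linarith+
    have Aa: "a - \<zeta> < alpha_err w \<sigma> n (t n)" "alpha_err w \<sigma> n (t n) < a + \<zeta>" using A by (simp_all only: abs_less_iff) linarith+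
    have Pz1: "1 - a < 2 * Phi ?z" using gz al Aa \<zeta> by linarith
    have Pz2: "2 * Phi ?z < 2 - a" using gz al Aa \<zeta> by linarith
    have zK: "\<bar>?z\<bar> \<le> K"
    proof -
      have "K1 < ?z" using K1[of ?z] Pz1 by (meson not_le order.asym)
      moreover have "?z < K2" using K2[of ?z] Pz2 by (meson not_le order.asym)
      ultimately show ?thesis unfolding K_def by auto
    qed
    have zK2: "- K \<le> ?z" "?z \<le> K" using zK unfolding abs_le_iff by linarith+
    have z1: "\<bar>?z - ?h\<bar> \<le> K + ?h" unfolding abs_le_iff using zK2 \<epsilon> by linarith
    have z2: "\<bar>?z\<bar> \<le> K + ?h" unfolding abs_le_iff using zK2 \<epsilon> by linarith
    have z3: "?z - ?h \<le> ?z" using \<epsilon> by simp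
    have "(?z - (?z - ?h)) * std_normal_density (K + ?h) \<le> Phi ?z - Phi (?z - ?h)"
      by (rule Phi_diff_ge[OF z3 z1 z2])
    then have PG: "\<Gamma> \<le> Phi ?z - Phi (?z - ?h)" unfolding \<Gamma>_def by simp
    have b: "beta_err w \<sigma> n (f n) (t n) \<le> Gn w n (?z - ?D / 2) + 16 * u0 w n / ?D"
      by (rule beta_upper[OF f Dp])
    have b2: "Gn w n (?z - ?D / 2) \<le> Gn w n (?z - ?h)" by (rule Gn_mono) (use De in simp)
    have b3: "16 * u0 w n / ?D \<le> 16 * u0 w n / \<epsilon>"
      by (rule divide_left_mono) (use De \<epsilon> u0_nonneg[OF n] in auto)
    have "\<bar>Gn w n (?z - ?h) - Phi (?z - ?h)\<bar> \<le> \<zeta>" using G by blast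
    then have g3: "Gn w n (?z - ?h) \<le> Phi (?z - ?h) + \<zeta>" by (simp only: abs_le_iff) linarith
    show ?case using b b2 b3 g3 PG gz al Aa U \<zeta> by linarith
  qed
  then have "limsup (\<lambda>i. ereal (beta_err w \<sigma> (id i) (f i) (t i))) \<le> ereal (1 - a - \<Gamma> / 4)"
    by (intro Limsup_bounded) simp
  also have "\<dots> < ereal (1 - a)" using \<Gamma> by simp
  finally show "limsup (\<lambda>i. ereal (beta_err w \<sigma> (id i) (f i) (t i))) < ereal (1 - a)" .
qed

end

lemma l2_add: "l2 a \<Longrightarrow> l2 b \<Longrightarrow> l2 (\<lambda>j. a j + b j)"
  unfolding l2_def
proof -
  assume a: "summable (\<lambda>j. (a j)^2)" and b: "summable (\<lambda>j. (b j)^2)"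
  show "summable (\<lambda>j. (a j + b j)^2)"
  proof (rule summable_comparison_test[OF _ summable_add[OF summable_mult[OF a, of 2] summable_mult[OF b, of 2]]])
    show "\<exists>N. \<forall>n\<ge>N. norm ((a n + b n)^2) \<le> 2 * (a n)^2 + 2 * (b n)^2"
    proof (intro exI allI impI)
      fix n
      have e: "(a n + b n)^2 + (a n - b n)^2 = 2 * (a n)^2 + 2 * (b n)^2" by (simp add: power2_eq_square algebra_simps)
      have "0 \<le> (a n - b n)^2" by simp
      then have "(a n + b n)^2 \<le> 2 * (a n)^2 + 2 * (b n)^2" using e by linarith
      then show "norm ((a n + b n)^2) \<le> 2 * (a n)^2 + 2 * (b n)^2" by simp
    qed
  qed
qed

lemma l2_scale: "l2 a \<Longrightarrow> l2 (\<lambda>j. c * a j)"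
  unfolding l2_def by (simp add: power_mult_distrib summable_mult)

lemma l2_neg: "l2 a \<Longrightarrow> l2 (\<lambda>j. - a j)"
  unfolding l2_def by simp

lemma l2_diff: "l2 a \<Longrightarrow> l2 b \<Longrightarrow> l2 (\<lambda>j. a j - b j)"
  using l2_add[of a "\<lambda>j. - b j"] l2_neg[of b] by simp

lemma l2_prod: "l2 a \<Longrightarrow> l2 b \<Longrightarrow> summable (\<lambda>j. a j * b j)"
  unfolding l2_def
proof -
  assume a: "summable (\<lambda>j. (a j)^2)" and b: "summable (\<lambda>j. (b j)^2)"
  show "summable (\<lambda>j. a j * b j)"
  proof (rule summable_comparison_test[OF _ summable_add[OF a b]])
    show "\<exists>N. \<forall>n\<ge>N. norm (a n * b n) \<le> (a n)^2 + (b n)^2"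
    proof (intro exI allI impI)
      fix n
      have "2 * \<bar>a n * b n\<bar> \<le> (a n)^2 + (b n)^2"
        using sum_squares_bound[of "\<bar>a n\<bar>" "\<bar>b n\<bar>"] by (simp add: abs_mult power2_abs)
      then show "norm (a n * b n) \<le> (a n)^2 + (b n)^2" by simp
    qed
  qed
qed

lemma nrm_sq: "l2 a \<Longrightarrow> (nrm a)^2 = (\<Sum>j. (a j)^2)"
  unfolding nrm_def l2_def by (simp add: suminf_nonneg)

lemma nrm_nonneg: "l2 a \<Longrightarrow> 0 \<le> nrm a"
  unfolding nrm_def l2_def by (simp add: suminf_nonneg)

lemma nrm_neg: "nrm (\<lambda>j. - a j) = nrm a" unfolding nrm_def by simp

lemma inr_comm: "inr a b = inr b a" unfolding inr_def by (simp add: mult.commute)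

lemma nrm_add_sq:
  assumes "l2 a" "l2 b"
  shows "(nrm (\<lambda>j. a j + b j))^2 = (nrm a)^2 + (nrm b)^2 + 2 * inr a b"
proof -
  have sa: "summable (\<lambda>j. (a j)^2)" and sb: "summable (\<lambda>j. (b j)^2)" using assms unfolding l2_def by auto
  have sab: "summable (\<lambda>j. a j * b j)" by (rule l2_prod[OF assms])
  have "(nrm (\<lambda>j. a j + b j))^2 = (\<Sum>j. (a j)^2 + (b j)^2 + 2 * (a j * b j))"
    by (subst nrm_sq[OF l2_add[OF assms]]) (simp add: power2_eq_square algebra_simps)
  also have "\<dots> = (\<Sum>j. (a j)^2 + (b j)^2) + (\<Sum>j. 2 * (a j * b j))"
    by (rule suminf_add[symmetric]) (intro summable_add sa sb, intro summable_mult sab)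
  also have "(\<Sum>j. (a j)^2 + (b j)^2) = (\<Sum>j. (a j)^2) + (\<Sum>j. (b j)^2)"
    by (rule suminf_add[symmetric, OF sa sb])
  also have "(\<Sum>j. 2 * (a j * b j)) = 2 * (\<Sum>j. a j * b j)" by (rule suminf_mult[OF sab])
  finally show ?thesis using nrm_sq[OF assms(1)] nrm_sq[OF assms(2)] unfolding inr_def by simp
qed

lemma pythag:
  assumes "l2 a" "l2 b" "inr b a = 0"
  shows "(nrm (\<lambda>j. a j + b j))^2 = (nrm a)^2 + (nrm b)^2"
  using nrm_add_sq[OF assms(1,2)] assms(3) inr_comm[of a b] by simp

lemma nrm_scale: "l2 a \<Longrightarrow> nrm (\<lambda>j. c * a j) = \<bar>c\<bar> * nrm a"
proof -
  assume a: "l2 a"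
  have "(nrm (\<lambda>j. c * a j))^2 = (\<Sum>j. c^2 * (a j)^2)"
    by (subst nrm_sq[OF l2_scale[OF a]]) (simp add: power_mult_distrib)
  also have "\<dots> = c^2 * (nrm a)^2" using a unfolding l2_def by (simp add: suminf_mult nrm_sq[OF a])
  also have "\<dots> = (\<bar>c\<bar> * nrm a)^2" by (simp add: power_mult_distrib)
  finally have "(nrm (\<lambda>j. c * a j))^2 = (\<bar>c\<bar> * nrm a)^2" .
  then show ?thesis using nrm_nonneg[OF a] nrm_nonneg[OF l2_scale[OF a], of c]
    by (metis abs_ge_zero power2_eq_imp_eq zero_le_mult_iff)
qed

lemma inr_scale_left: "l2 a \<Longrightarrow> l2 b \<Longrightarrow> inr (\<lambda>j. c * a j) b = c * inr a b"
  unfolding inr_def using l2_prod by (simp add: mult.assoc suminf_mult)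

lemma inr_diff_right: "l2 a \<Longrightarrow> l2 b \<Longrightarrow> l2 d \<Longrightarrow> inr a (\<lambda>j. b j - d j) = inr a b - inr a d"
  unfolding inr_def using l2_prod[of a b] l2_prod[of a d] by (simp add: right_diff_distrib suminf_diff)

lemma inr_self: "l2 a \<Longrightarrow> inr a a = (nrm a)^2"
  unfolding inr_def using nrm_sq by (simp add: power2_eq_square)

context wn begin

lemma Aw_scale: "l2 \<theta> \<Longrightarrow> Aw w n (\<lambda>j. c * \<theta> j) = c^2 * Aw w n \<theta>"
  unfolding Aw_def using sum_vth by (simp add: power_mult_distrib suminf_mult[symmetric] algebra_simps)

lemma Dn_scale: "l2 \<theta> \<Longrightarrow> Dn w \<sigma> n (\<lambda>j. c * \<theta> j) = c^2 * Dn w \<sigma> n \<theta>"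
  unfolding Dn_def by (simp add: Aw_scale)

lemma Dn_neg: "l2 \<theta> \<Longrightarrow> Dn w \<sigma> n (\<lambda>j. - \<theta> j) = Dn w \<sigma> n \<theta>"
  using Dn_scale[of \<theta> "-1"] by simp

end

lemma powr_sq: "0 < (x::real) \<Longrightarrow> (x powr (-(r::real)))^2 = x powr (-2*r)"
  by (simp add: power2_eq_square powr_add[symmetric])

lemma frequently_inf: "frequently P sequentially \<Longrightarrow> infinite {i::nat. P i}"
  by (simp add: frequently_cofinite[symmetric] cofinite_eq_sequentially)

lemma not_eventually_seq: "\<not> eventually (\<lambda>n. \<not> P n) sequentially \<Longrightarrow> \<exists>n\<ge>N. P n"
  unfolding eventually_sequentially by auto

lemma neg_not_tendsto:
  fixes q :: "nat \<Rightarrow> real"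
  assumes "\<And>i. q i \<le> - c" "0 < c"
  shows "\<not> q \<longlonglongrightarrow> 0"
proof
  assume "q \<longlonglongrightarrow> 0"
  then have "eventually (\<lambda>i. - c < q i) sequentially" by (rule order_tendstoD(1)) (use assms(2) in simp)
  then obtain i where "- c < q i" by (auto simp: eventually_sequentially)
  then show False using assms(1)[of i] by simp
qed

lemma pow_pos: "1 \<le> m \<Longrightarrow> 0 < real m powr (-r)" by simp

lemma nrm_zero: "nrm (\<lambda>j. 0) = 0" unfolding nrm_def by simp

context glob begin

lemma Dn_nonneg': "1 \<le> m \<Longrightarrow> l2 \<theta> \<Longrightarrow> 0 \<le> Dn w \<sigma> m \<theta>"
  using wn.Dn_nonneg[OF wn] by blast

lemma Dn_scale': "1 \<le> m \<Longrightarrow> l2 \<theta> \<Longrightarrow> Dn w \<sigma> m (\<lambda>j. c * \<theta> j) = c^2 * Dn w \<sigma> m \<theta>"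
  using wn.Dn_scale[OF wn] by blast

lemma Dn_neg': "1 \<le> m \<Longrightarrow> l2 \<theta> \<Longrightarrow> Dn w \<sigma> m (\<lambda>j. - \<theta> j) = Dn w \<sigma> m \<theta>"
  using wn.Dn_neg[OF wn] by blast

lemma neg_inconsistent:
  assumes ns: "subseq_idx ns" and g: "\<And>i. l2 (g i)" and inc: "inconsistent w \<sigma> ns g"
  shows "inconsistent w \<sigma> ns (\<lambda>i j. - g i j)"
proof (rule inconsistent_of_D0[OF ns])
  show "l2 (\<lambda>j. - g i j)" for i by (rule l2_neg[OF g])
  have "(\<lambda>i. Dn w \<sigma> (ns i) (g i)) \<longlonglongrightarrow> 0" by (rule D0_of_inconsistent[OF ns g inc])
  then show "(\<lambda>i. Dn w \<sigma> (ns i) (\<lambda>j. - g i j)) \<longlonglongrightarrow> 0"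
    using Dn_neg'[OF subseq_ge1[OF ns] g] by simp
qed

lemma dir2_cons:
  assumes fl2: "\<forall>n. l2 (f n)" and fnorm: "rate_bounded r id f"
    and R: "\<forall>ns f1. subseq_idx ns \<and> (\<forall>i. l2 (f1 i)) \<and> r_inconsistent w \<sigma> r ns f1 \<longrightarrow>
        (\<lambda>i. ((nrm (\<lambda>j. f (ns i) j + f1 i j))\<^sup>2 - (nrm (f (ns i)))\<^sup>2 - (nrm (f1 i))\<^sup>2)
              / real (ns i) powr (-2*r)) \<longlonglongrightarrow> 0"
  shows "consistent w \<sigma> id f"
proof (rule ccontr)
  assume nc: "\<not> consistent w \<sigma> id f"
  obtain cf Cf where cf: "0 < cf" "cf < Cf"
    and fb: "\<And>i. 1 \<le> i \<Longrightarrow> cf * real i powr (-r) < nrm (f i) \<and> nrm (f i) < Cf * real i powr (-r)"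
    using fnorm unfolding rate_bounded_def by auto
  have H: "\<exists>n\<ge>N. Dn w \<sigma> n (f n) < e" if e: "0 < e" for e N
  proof -
    have "\<not> eventually (\<lambda>n. e \<le> Dn w \<sigma> n (f n)) sequentially"
      using consistent_of_Dpos[OF _ e] fl2 nc by blast
    then have "\<not> eventually (\<lambda>n. \<not> Dn w \<sigma> n (f n) < e) sequentially" by (simp add: not_less)
    then show ?thesis by (rule not_eventually_seq)
  qed
  have "\<exists>ns. \<forall>k. (1 \<le> ns k \<and> Dn w \<sigma> (ns k) (f (ns k)) < 1 / real (Suc k)) \<and> ns k < ns (Suc k)"
  proof (rule dependent_nat_choice)
    show "\<exists>x. 1 \<le> x \<and> Dn w \<sigma> x (f x) < 1 / real (Suc 0)" using H[of 1 1] by auto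
    fix x k assume "1 \<le> x \<and> Dn w \<sigma> x (f x) < 1 / real (Suc k)"
    obtain y where "y \<ge> Suc x" "Dn w \<sigma> y (f y) < 1 / real (Suc (Suc k))" using H[of "1 / real (Suc (Suc k))" "Suc x"] by auto
    then show "\<exists>y. (1 \<le> y \<and> Dn w \<sigma> y (f y) < 1 / real (Suc (Suc k))) \<and> x < y" by (intro exI[of _ y]) auto
  qed
  then obtain ns where nsP: "\<And>k. 1 \<le> ns k" "\<And>k. Dn w \<sigma> (ns k) (f (ns k)) < 1 / real (Suc k)"
    and nsI: "\<And>k. ns k < ns (Suc k)" by blast
  have ns: "subseq_idx ns" unfolding subseq_idx_def using nsP(1) nsI by (simp add: strict_mono_Suc_iff)
  have D0: "(\<lambda>k. Dn w \<sigma> (ns k) (f (ns k))) \<longlonglongrightarrow> 0"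
  proof (rule tendsto_sandwich[OF _ _ tendsto_const LIMSEQ_inverse_real_of_nat])
    show "eventually (\<lambda>k. 0 \<le> Dn w \<sigma> (ns k) (f (ns k))) sequentially"
      using Dn_nonneg'[OF nsP(1)] fl2 by simp
    show "eventually (\<lambda>k. Dn w \<sigma> (ns k) (f (ns k)) \<le> inverse (real (Suc k))) sequentially"
      using nsP(2) by (simp add: less_imp_le divide_inverse)
  qed
  define f1 where "f1 k = (\<lambda>j. - f (ns k) j)" for k
  have f1l2: "\<forall>i. l2 (f1 i)" unfolding f1_def using fl2 l2_neg by auto
  have inc: "inconsistent w \<sigma> ns f1"
  proof (rule inconsistent_of_D0[OF ns])
    show "l2 (f1 i)" for i using f1l2 by auto
    show "(\<lambda>i. Dn w \<sigma> (ns i) (f1 i)) \<longlonglongrightarrow> 0" unfolding f1_def using D0 Dn_neg'[OF nsP(1)] fl2 by simp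
  qed
  have rb: "rate_bounded r ns f1"
    unfolding rate_bounded_def f1_def nrm_neg using cf fb nsP(1) by blast
  have lim: "(\<lambda>i. ((nrm (\<lambda>j. f (ns i) j + f1 i j))\<^sup>2 - (nrm (f (ns i)))\<^sup>2 - (nrm (f1 i))\<^sup>2)
              / real (ns i) powr (-2*r)) \<longlonglongrightarrow> 0"
    using R ns f1l2 inc rb unfolding r_inconsistent_def by blast
  have "((nrm (\<lambda>j. f (ns i) j + f1 i j))\<^sup>2 - (nrm (f (ns i)))\<^sup>2 - (nrm (f1 i))\<^sup>2) / real (ns i) powr (-2*r) \<le> - (2 * cf^2)" for i
  proof -
    let ?x = "real (ns i) powr (-r)"
    have x: "0 < ?x" using nsP(1)[of i] by simp
    have p: "real (ns i) powr (-2*r) = ?x^2" using powr_sq[of "real (ns i)" r] nsP(1)[of i] by simp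
    have "cf * ?x < nrm (f (ns i))" using fb nsP(1) by blast
    then have "(cf * ?x)^2 < (nrm (f (ns i)))^2" using cf x by (intro power_strict_mono) auto
    then have lt: "cf^2 * ?x^2 < (nrm (f (ns i)))^2" by (simp add: power_mult_distrib)
    have "((nrm (\<lambda>j. f (ns i) j + f1 i j))\<^sup>2 - (nrm (f (ns i)))\<^sup>2 - (nrm (f1 i))\<^sup>2) = - 2 * (nrm (f (ns i)))^2"
      unfolding f1_def nrm_neg by (simp add: nrm_zero)
    then show ?thesis unfolding p using lt x by (simp add: field_simps)
  qed
  then show False using neg_not_tendsto[of _ "2 * cf^2"] lim cf by simp
qed

end

context glob begin

lemma dir2_nodec:
  assumes fl2: "\<forall>n. l2 (f n)" and fnorm: "rate_bounded r id f"
    and R: "\<forall>ns f1. subseq_idx ns \<and> (\<forall>i. l2 (f1 i)) \<and> r_inconsistent w \<sigma> r ns f1 \<longrightarrow>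
        (\<lambda>i. ((nrm (\<lambda>j. f (ns i) j + f1 i j))\<^sup>2 - (nrm (f (ns i)))\<^sup>2 - (nrm (f1 i))\<^sup>2)
              / real (ns i) powr (-2*r)) \<longlonglongrightarrow> 0"
  shows "\<not> (\<exists>ns f1 f2 c1. subseq_idx ns \<and> 0 < c1 \<and>
          (\<forall>i. l2 (f1 i) \<and> l2 (f2 i) \<and> f (ns i) = (\<lambda>j. f1 i j + f2 i j) \<and>
               inr (f2 i) (f1 i) = 0 \<and> c1 * real (ns i) powr (-r) < nrm (f2 i)) \<and>
          inconsistent w \<sigma> ns f2)"
proof
  assume "\<exists>ns f1 f2 c1. subseq_idx ns \<and> 0 < c1 \<and>
          (\<forall>i. l2 (f1 i) \<and> l2 (f2 i) \<and> f (ns i) = (\<lambda>j. f1 i j + f2 i j) \<and>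
               inr (f2 i) (f1 i) = 0 \<and> c1 * real (ns i) powr (-r) < nrm (f2 i)) \<and>
          inconsistent w \<sigma> ns f2"
  then obtain ns f1 f2 c1 where ns: "subseq_idx ns" and c1: "0 < c1"
    and P: "\<And>i. l2 (f1 i)" "\<And>i. l2 (f2 i)" "\<And>i. f (ns i) = (\<lambda>j. f1 i j + f2 i j)"
       "\<And>i. inr (f2 i) (f1 i) = 0" "\<And>i. c1 * real (ns i) powr (-r) < nrm (f2 i)"
    and inc: "inconsistent w \<sigma> ns f2" by blast
  obtain cf Cf where cf: "0 < cf" "cf < Cf"
    and fb: "\<And>i. 1 \<le> i \<Longrightarrow> cf * real i powr (-r) < nrm (f i) \<and> nrm (f i) < Cf * real i powr (-r)"
    using fnorm unfolding rate_bounded_def by auto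
  define g where "g i = (\<lambda>j. - f2 i j)" for i
  have gl2: "\<forall>i. l2 (g i)" unfolding g_def using P(2) l2_neg by auto
  have ginc: "inconsistent w \<sigma> ns g" unfolding g_def by (rule neg_inconsistent[OF ns P(2) inc])
  have n1: "1 \<le> ns i" for i by (rule subseq_ge1[OF ns])
  have f2le: "nrm (f2 i) \<le> nrm (f (ns i))" for i
  proof -
    have "(nrm (f (ns i)))^2 = (nrm (f1 i))^2 + (nrm (f2 i))^2"
      unfolding P(3) by (rule pythag[OF P(1) P(2) P(4)])
    then have "(nrm (f2 i))^2 \<le> (nrm (f (ns i)))^2" by simp
    then show ?thesis using nrm_nonneg[OF fl2[rule_format, of "ns i"]] by (rule power2_le_imp_le)
  qed
  have rb: "rate_bounded r ns g"
    unfolding rate_bounded_def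
  proof (intro exI conjI allI impI)
    show "0 < min c1 (Cf / 2)" using c1 cf by simp
    show "min c1 (Cf / 2) < Cf" using cf by simp
    fix i
    have x: "0 < real (ns i) powr (-r)" using n1[of i] by simp
    have "min c1 (Cf / 2) * real (ns i) powr (-r) \<le> c1 * real (ns i) powr (-r)"
      using x by (intro mult_right_mono) auto
    then show "min c1 (Cf / 2) * real (ns i) powr (-r) < nrm (g i)" using P(5)[of i] unfolding g_def nrm_neg by linarith
    show "nrm (g i) < Cf * real (ns i) powr (-r)" unfolding g_def nrm_neg using f2le[of i] fb[OF n1[of i]] by linarith
  qed
  have lim: "(\<lambda>i. ((nrm (\<lambda>j. f (ns i) j + g i j))\<^sup>2 - (nrm (f (ns i)))\<^sup>2 - (nrm (g i))\<^sup>2)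
              / real (ns i) powr (-2*r)) \<longlonglongrightarrow> 0"
    using R ns gl2 ginc rb unfolding r_inconsistent_def by blast
  have "((nrm (\<lambda>j. f (ns i) j + g i j))\<^sup>2 - (nrm (f (ns i)))\<^sup>2 - (nrm (g i))\<^sup>2) / real (ns i) powr (-2*r) \<le> - (2 * c1^2)" for i
  proof -
    let ?x = "real (ns i) powr (-r)"
    have x: "0 < ?x" using n1[of i] by simp
    have p: "real (ns i) powr (-2*r) = ?x^2" using powr_sq[of "real (ns i)" r] n1[of i] by simp
    have "(c1 * ?x)^2 < (nrm (f2 i))^2" using P(5)[of i] c1 x by (intro power_strict_mono) auto
    then have lt: "c1^2 * ?x^2 < (nrm (f2 i))^2" by (simp add: power_mult_distrib)
    have e1: "(\<lambda>j. f (ns i) j + g i j) = f1 i" unfolding g_def P(3) by auto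
    have e2: "(nrm (f (ns i)))^2 = (nrm (f1 i))^2 + (nrm (f2 i))^2"
      unfolding P(3) by (rule pythag[OF P(1) P(2) P(4)])
    have "((nrm (\<lambda>j. f (ns i) j + g i j))\<^sup>2 - (nrm (f (ns i)))\<^sup>2 - (nrm (g i))\<^sup>2) = - 2 * (nrm (f2 i))^2"
    proof -
      have e3: "nrm (\<lambda>j. f (ns i) j + g i j) = nrm (f1 i)" using e1 by simp
      have e4: "nrm (g i) = nrm (f2 i)" unfolding g_def by (rule nrm_neg)
      show ?thesis unfolding e3 e4 e2 by simp
    qed
    then show ?thesis unfolding p using lt x by (simp add: field_simps)
  qed
  then show False using neg_not_tendsto[of _ "2 * c1^2"] lim c1 by simp
qed

end

context glob begin

lemma dir1:
  assumes fl2: "\<forall>n. l2 (f n)" and fnorm: "rate_bounded r id f"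
    and P: "purely_r_consistent w \<sigma> r f"
  shows "\<forall>ns f1. subseq_idx ns \<and> (\<forall>i. l2 (f1 i)) \<and> r_inconsistent w \<sigma> r ns f1 \<longrightarrow>
        (\<lambda>i. ((nrm (\<lambda>j. f (ns i) j + f1 i j))\<^sup>2 - (nrm (f (ns i)))\<^sup>2 - (nrm (f1 i))\<^sup>2)
              / real (ns i) powr (-2*r)) \<longlonglongrightarrow> 0"
proof (intro allI impI, elim conjE)
  fix ns f1
  assume ns: "subseq_idx ns" and f1l2: "\<forall>i. l2 (f1 i)" and ri: "r_inconsistent w \<sigma> r ns f1"
  have inc1: "inconsistent w \<sigma> ns f1" using ri unfolding r_inconsistent_def by simp
  obtain c' C' where c': "0 < c'" "c' < C'"
    and gb: "\<And>i. 1 \<le> ns i \<Longrightarrow> c' * real (ns i) powr (-r) < nrm (f1 i) \<and> nrm (f1 i) < C' * real (ns i) powr (-r)"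
    using ri unfolding r_inconsistent_def rate_bounded_def by auto
  obtain cf Cf where cf: "0 < cf" "cf < Cf"
    and fb: "\<And>i. 1 \<le> i \<Longrightarrow> cf * real i powr (-r) < nrm (f i) \<and> nrm (f i) < Cf * real i powr (-r)"
    using fnorm unfolding rate_bounded_def by auto
  have n1: "1 \<le> ns i" for i by (rule subseq_ge1[OF ns])
  define p where "p i = real (ns i) powr (-2*r)" for i
  define q where "q i = ((nrm (\<lambda>j. f (ns i) j + f1 i j))\<^sup>2 - (nrm (f (ns i)))\<^sup>2 - (nrm (f1 i))\<^sup>2) / p i" for i
  have qeq: "q i = 2 * inr (f (ns i)) (f1 i) / p i" for i
    unfolding q_def using nrm_add_sq[OF fl2[rule_format] f1l2[rule_format]] by simp
  show "(\<lambda>i. ((nrm (\<lambda>j. f (ns i) j + f1 i j))\<^sup>2 - (nrm (f (ns i)))\<^sup>2 - (nrm (f1 i))\<^sup>2)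
              / real (ns i) powr (-2*r)) \<longlonglongrightarrow> 0"
  proof (rule ccontr)
    assume nq: "\<not> ?thesis"
    then have "\<not> q \<longlonglongrightarrow> 0" unfolding q_def p_def by simp
    then obtain \<epsilon> where \<epsilon>: "0 < \<epsilon>" and ne: "\<not> eventually (\<lambda>i. \<bar>q i\<bar> < \<epsilon>) sequentially"
      unfolding tendsto_iff dist_real_def by auto
    have fr: "frequently (\<lambda>i. \<epsilon> \<le> \<bar>q i\<bar>) sequentially"
      using ne by (simp add: frequently_def not_le)
    obtain \<phi> :: "nat \<Rightarrow> nat" where \<phi>: "strict_mono \<phi>" and \<phi>S: "\<And>k. \<phi> k \<in> {i. \<epsilon> \<le> \<bar>q i\<bar>}"
      using infinite_enumerate[OF frequently_inf[OF fr]] by auto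
    define ns' where "ns' = ns \<circ> \<phi>"
    have ns': "subseq_idx ns'"
      unfolding subseq_idx_def ns'_def using ns \<phi> n1 unfolding subseq_idx_def by (simp add: strict_mono_o)
    define g where "g k = f1 (\<phi> k)" for k
    define F where "F k = f (ns' k)" for k
    have gl2: "l2 (g k)" for k unfolding g_def using f1l2 by simp
    have Fl2: "l2 (F k)" for k unfolding F_def using fl2 by simp
    define x where "x k = real (ns' k) powr (-r)" for k
    have x: "0 < x k" for k unfolding x_def ns'_def using n1[of "\<phi> k"] by simp
    have pk: "p (\<phi> k) = (x k)^2" for k
      unfolding p_def x_def ns'_def using powr_sq[of "real (ns (\<phi> k))" r] n1[of "\<phi> k"] by simp
    have gbk: "c' * x k < nrm (g k)" "nrm (g k) < C' * x k" for k
      unfolding g_def x_def ns'_def using gb[OF n1[of "\<phi> k"]] by auto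
    have Fbk: "nrm (F k) < Cf * x k" for k
      unfolding F_def x_def ns'_def using fb[OF n1[of "\<phi> k"]] by auto
    have gpos: "0 < nrm (g k)" for k
    proof -
      have "0 < c' * x k" using c' x[of k] by simp
      then show ?thesis using gbk(1)[of k] by linarith
    qed
    define lam where "lam k = inr (F k) (g k) / (nrm (g k))^2" for k
    define f2 where "f2 k = (\<lambda>j. lam k * g k j)" for k
    define f1' where "f1' k = (\<lambda>j. F k j - f2 k j)" for k
    have f2l2: "l2 (f2 k)" for k unfolding f2_def by (rule l2_scale[OF gl2])
    have f1'l2: "l2 (f1' k)" for k unfolding f1'_def by (rule l2_diff[OF Fl2 f2l2])
    have lamg: "lam k * (nrm (g k))^2 = inr (F k) (g k)" for k
      unfolding lam_def using gpos[of k] by simp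
    have orth: "inr (f2 k) (f1' k) = 0" for k
    proof -
      have "inr (f2 k) (f1' k) = lam k * inr (g k) (f1' k)"
        unfolding f2_def by (rule inr_scale_left[OF gl2 f1'l2])
      also have "inr (g k) (f1' k) = inr (g k) (F k) - inr (g k) (f2 k)"
        unfolding f1'_def by (rule inr_diff_right[OF gl2 Fl2 f2l2])
      also have "inr (g k) (f2 k) = lam k * (nrm (g k))^2"
        unfolding f2_def inr_comm[of "g k"] inr_scale_left[OF gl2 gl2] inr_self[OF gl2] ..
      also have "inr (g k) (F k) = lam k * (nrm (g k))^2" using lamg[of k] inr_comm[of "g k" "F k"] by simp
      finally show ?thesis by simp
    qed
    have decomp: "f (ns' k) = (\<lambda>j. f1' k j + f2 k j)" for k
      unfolding f1'_def F_def by auto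
    have nf2: "nrm (f2 k) = \<bar>inr (F k) (g k)\<bar> / nrm (g k)" for k
    proof -
      have "nrm (f2 k) = \<bar>lam k\<bar> * nrm (g k)" unfolding f2_def by (rule nrm_scale[OF gl2])
      also have "\<dots> = \<bar>inr (F k) (g k)\<bar> / nrm (g k)"
        unfolding lam_def using gpos[of k] by (simp add: abs_divide power2_eq_square)
      finally show ?thesis .
    qed
    have inrb: "\<epsilon> * (x k)^2 / 2 \<le> \<bar>inr (F k) (g k)\<bar>" for k
    proof -
      have "\<epsilon> \<le> \<bar>q (\<phi> k)\<bar>" using \<phi>S[of k] by simp
      also have "\<bar>q (\<phi> k)\<bar> = 2 * \<bar>inr (F k) (g k)\<bar> / (x k)^2"
        unfolding qeq pk F_def g_def ns'_def using x[of k] by (simp add: abs_mult abs_divide)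
      finally show ?thesis using x[of k] by (simp add: field_simps)
    qed
    define c1 where "c1 = \<epsilon> / (2 * C')"
    have C'pos: "0 < C'" using c' by simp
    have c1pos: "0 < c1" unfolding c1_def using \<epsilon> C'pos by simp
    have lower: "c1 * real (ns' k) powr (-r) < nrm (f2 k)" for k
    proof -
      have A: "0 < \<epsilon> * (x k)^2 / 2" using \<epsilon> x[of k] by simp
      have "c1 * x k = (\<epsilon> * (x k)^2 / 2) / (C' * x k)" unfolding c1_def using x[of k] C'pos
        by (simp add: field_simps power2_eq_square)
      also have "\<dots> < (\<epsilon> * (x k)^2 / 2) / nrm (g k)"
        by (rule divide_strict_left_mono[OF gbk(2) A]) (use gpos[of k] x[of k] C'pos in simp)
      also have "\<dots> \<le> \<bar>inr (F k) (g k)\<bar> / nrm (g k)"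
        by (rule divide_right_mono[OF inrb]) (use gpos[of k] in simp)
      finally show ?thesis unfolding nf2 x_def .
    qed
    have Dg: "(\<lambda>k. Dn w \<sigma> (ns' k) (g k)) \<longlonglongrightarrow> 0"
    proof -
      have "(\<lambda>i. Dn w \<sigma> (ns i) (f1 i)) \<longlonglongrightarrow> 0" by (rule D0_of_inconsistent[OF ns _ inc1]) (use f1l2 in simp)
      from LIMSEQ_subseq_LIMSEQ[OF this \<phi>] show ?thesis unfolding ns'_def g_def comp_def .
    qed
    define B where "B = (Cf / c')^2"
    have lam2: "(lam k)^2 \<le> B" for k
    proof -
      have "(nrm (F k))^2 = (nrm (f1' k))^2 + (nrm (f2 k))^2"
      proof -
        have "F k = (\<lambda>j. f1' k j + f2 k j)" using decomp[of k] unfolding F_def .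
        then show ?thesis using pythag[OF f1'l2 f2l2 orth] by simp
      qed
      then have "(nrm (f2 k))^2 \<le> (nrm (F k))^2" by simp
      moreover have "nrm (f2 k) = \<bar>lam k\<bar> * nrm (g k)" unfolding f2_def by (rule nrm_scale[OF gl2])
      ultimately have le1: "(lam k)^2 * (nrm (g k))^2 \<le> (nrm (F k))^2" by (simp add: power_mult_distrib)
      have "(nrm (F k))^2 \<le> (Cf * x k)^2" using Fbk[of k] nrm_nonneg[OF Fl2[of k]] by (intro power_mono) auto
      also have "\<dots> = (Cf / c')^2 * (c' * x k)^2" using c' by (simp add: field_simps)
      also have "\<dots> \<le> (Cf / c')^2 * (nrm (g k))^2"
        using gbk(1)[of k] c' x[of k] by (intro mult_left_mono power_mono) auto
      finally have "(lam k)^2 * (nrm (g k))^2 \<le> B * (nrm (g k))^2" using le1 unfolding B_def by simp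
      then show ?thesis using gpos[of k] by simp
    qed
    have incf2: "inconsistent w \<sigma> ns' f2"
    proof (rule inconsistent_of_D0[OF ns' f2l2])
      have n1': "1 \<le> ns' k" for k unfolding ns'_def using n1 by simp
      have eq: "Dn w \<sigma> (ns' k) (f2 k) = (lam k)^2 * Dn w \<sigma> (ns' k) (g k)" for k
        unfolding f2_def by (rule Dn_scale'[OF n1' gl2])
      show "(\<lambda>k. Dn w \<sigma> (ns' k) (f2 k)) \<longlonglongrightarrow> 0"
      proof (rule tendsto_sandwich[OF _ _ tendsto_const])
        show "eventually (\<lambda>k. 0 \<le> Dn w \<sigma> (ns' k) (f2 k)) sequentially"
          using Dn_nonneg'[OF n1' f2l2] by simp
        show "eventually (\<lambda>k. Dn w \<sigma> (ns' k) (f2 k) \<le> B * Dn w \<sigma> (ns' k) (g k)) sequentially"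
          unfolding eq using lam2 Dn_nonneg'[OF n1' gl2] by (intro always_eventually allI mult_right_mono) auto
        show "(\<lambda>k. B * Dn w \<sigma> (ns' k) (g k)) \<longlonglongrightarrow> 0" using tendsto_mult_right_zero[OF Dg] by simp
      qed
    qed
    have "\<exists>ns f1 f2 c1. subseq_idx ns \<and> 0 < c1 \<and>
          (\<forall>i. l2 (f1 i) \<and> l2 (f2 i) \<and> f (ns i) = (\<lambda>j. f1 i j + f2 i j) \<and>
               inr (f2 i) (f1 i) = 0 \<and> c1 * real (ns i) powr (-r) < nrm (f2 i)) \<and>
          inconsistent w \<sigma> ns f2"
      using ns' c1pos f1'l2 f2l2 decomp orth lower incf2 by blast
    then show False using P unfolding purely_r_consistent_def by blast
  qed
qed

end

theorem theorem12:
  fixes w :: "nat \<Rightarrow> nat \<Rightarrow> real" and \<sigma> r :: real and f :: "nat \<Rightarrow> nat \<Rightarrow> real"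
  assumes sigma: "0 < \<sigma>"
    and r: "0 < r" "r < 1/2"
    and weights: "\<forall>n\<ge>1. (\<forall>j. 0 \<le> w n j) \<and> summable (w n)"
    and A1: "\<forall>n\<ge>1. \<forall>j. w n (Suc j) \<le> w n j"
    and A2: "\<exists>C1 C2. 0 < C1 \<and> (\<forall>n\<ge>1. C1 < real n ^ 2 / \<sigma> ^ 4 * (\<Sum>j. (w n j)\<^sup>2)
                                      \<and> real n ^ 2 / \<sigma> ^ 4 * (\<Sum>j. (w n j)\<^sup>2) < C2)"
    and A3: "\<exists>c1 c2. 0 < c1 \<and> (\<forall>n\<ge>1. c1 * real n powr (-2*r) \<le> rho w n
                                      \<and> rho w n \<le> c2 * real n powr (-2*r))"
    and A4: "\<exists>C1 lam. 0 < C1 \<and> 1 < lam \<and> (\<forall>\<delta>>0. \<forall>n\<ge>1.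
               w n (nat \<lfloor>(1 + \<delta>) * real (kn w n)\<rfloor> - 1) < C1 * (1 + \<delta>) powr (-lam) * kap w n)"
    and A5a: "\<exists>c C. 0 < c \<and> (\<forall>n\<ge>1. c * kap w n \<le> w n 0 \<and> w n 0 \<le> C * kap w n)"
    and A5b: "\<forall>c>1. \<exists>C>0. \<forall>n\<ge>1. w n (nat \<lfloor>c * real (kn w n)\<rfloor> - 1) \<ge> C * kap w n"
    and fl2: "\<forall>n. l2 (f n)"
    and fnorm: "rate_bounded r id f"
  shows "purely_r_consistent w \<sigma> r f \<longleftrightarrow>
     (\<forall>ns f1. subseq_idx ns \<and> (\<forall>i. l2 (f1 i)) \<and> r_inconsistent w \<sigma> r ns f1 \<longrightarrow>
        (\<lambda>i. ((nrm (\<lambda>j. f (ns i) j + f1 i j))\<^sup>2 - (nrm (f (ns i)))\<^sup>2 - (nrm (f1 i))\<^sup>2)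
              / real (ns i) powr (-2*r)) \<longlonglongrightarrow> 0)"
  proof -
  interpret glob w \<sigma> r
    by (rule glob.intro[OF sigma r(1) r(2) weights A1 A2 A3 A5a])
  show ?thesis
  proof
    assume P: "purely_r_consistent w \<sigma> r f"
    show "\<forall>ns f1. subseq_idx ns \<and> (\<forall>i. l2 (f1 i)) \<and> r_inconsistent w \<sigma> r ns f1 \<longrightarrow>
        (\<lambda>i. ((nrm (\<lambda>j. f (ns i) j + f1 i j))\<^sup>2 - (nrm (f (ns i)))\<^sup>2 - (nrm (f1 i))\<^sup>2)
              / real (ns i) powr (-2*r)) \<longlonglongrightarrow> 0"
      by (rule dir1[OF fl2 fnorm P])
  next
    assume R: "\<forall>ns f1. subseq_idx ns \<and> (\<forall>i. l2 (f1 i)) \<and> r_inconsistent w \<sigma> r ns f1 \<longrightarrow>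
        (\<lambda>i. ((nrm (\<lambda>j. f (ns i) j + f1 i j))\<^sup>2 - (nrm (f (ns i)))\<^sup>2 - (nrm (f1 i))\<^sup>2)
              / real (ns i) powr (-2*r)) \<longlonglongrightarrow> 0"
    show "purely_r_consistent w \<sigma> r f"
      unfolding purely_r_consistent_def r_consistent_def
      using dir2_cons[OF fl2 fnorm R] fnorm dir2_nodec[OF fl2 fnorm R] by blast
  qed
qed

end
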